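(* Let $m\in\mathbb{Z}_{>0}$ and $n\in\mathbb{Z}_{\ge 0}$ with $m\geq n$, and let $\psi=\psi_{m,n}:\mathcal{G}^{(m,n)}\to\mathbb{C}$ be a Whittaker function. If $\psi(I_{m+n-1})\,\psi(J_{m+n-1})\neq 0$, then the induced module $W'=\mathrm{Ind}_{\mathcal{G}^{(m,n)}}^{\mathcal{G}^{(m,0)}}\mathbb{C}w_{\psi}=\mathcal{U}(\mathcal{G}^{(m,0)})\otimes_{\mathcal{U}(\mathcal{G}^{(m,n)})}\mathbb{C}w_\psi$ is an irreducible $\mathcal{G}^{(m,0)}$-module. Moreover, for all $w\in W'$ and all $i\in\mathbb{Z}_{\ge0}$, $$L_{m+n+i}w=\psi(L_{m+n+i})w,\quad H_{m+n+i}w=\psi(H_{m+n+i})w,\quad I_{n+i}w=\psi(I_{n+i})w,\quad J_{n+i}w=\psi(J_{n+i})w.$$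
   Context: $\mathcal{G}$ is the complex Lie algebra with basis $\{L_n,H_n,I_n,J_n,\mathbf{c}_1,\mathbf{c}_2,\mathbf{c}_3: n\in\mathbb{Z}\}$ whose brackets of basis elements are $[L_m,L_n]=(n-m)L_{m+n}+\frac{m^3-m}{12}\delta_{m+n,0}\mathbf{c}_1$, $[L_m,H_n]=nH_{m+n}+m^2\delta_{m+n,0}\mathbf{c}_2$, $[H_m,H_n]=m\delta_{m+n,0}\mathbf{c}_3$, $[L_m,I_n]=(n-m)I_{m+n}$, $[L_m,J_n]=(n-m)J_{m+n}$, $[H_m,I_n]=I_{m+n}$, $[H_m,J_n]=-J_{m+n}$ (and the antisymmetric counterparts), all other brackets of basis elements being zero (so $\mathbf{c}_1,\mathbf{c}_2,\mathbf{c}_3$ are central and the $I$'s and $J$'s commute among themselves). For $m,n\in\mathbb{Z}_{\ge0}$ let $\mathcal{G}^{(m,n)}=\sum_{i\ge0}(\mathbb{C}L_{m+i}+\mathbb{C}H_{m+i}+\mathbb{C}I_{n+i}+\mathbb{C}J_{n+i})+\mathbb{C}\mathbf{c}_1+\mathbb{C}\mathbf{c}_2+\mathbb{C}\mathbf{c}_3$, a subalgebra. A Whittaker function $\psi_{m,n}$ is a Lie algebra homomorphism $\mathcal{G}^{(m,n)}\to\mathbb{C}$ (i.e. a linear map vanishing on $[\mathcal{G}^{(m,n)},\mathcal{G}^{(m,n)}]$); $\mathbb{C}w_{\psi}$ denotes the one-dimensional $\mathcal{G}^{(m,n)}$-module with $x\cdot w_\psi=\psi(x)w_\psi$. *)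

theory Defs
  imports Complex_Main
begin

text \<open>Basis of the Lie algebra G: L_n, H_n, I_n, J_n (n integer) and central c1, c2, c3.\<close>
datatype gb = L int | H int | I int | J int | C1 | C2 | C3

text \<open>Bracket of two basis elements, as a formal linear combination (coefficient, basis element).\<close>
fun brk :: "gb \<Rightarrow> gb \<Rightarrow> (complex \<times> gb) list" where
  "brk (L a) (L b) = [(of_int (b - a), L (a + b))] @
      (if a + b = 0 then [(of_int (a^3 - a) / 12, C1)] else [])"
| "brk (L a) (H b) = [(of_int b, H (a + b))] @
      (if a + b = 0 then [(of_int (a^2), C2)] else [])"
| "brk (H a) (L b) = [(- of_int a, H (a + b))] @
      (if a + b = 0 then [(- of_int (b^2), C2)] else [])"
| "brk (H a) (H b) = (if a + b = 0 then [(of_int a, C3)] else [])"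
| "brk (L a) (I b) = [(of_int (b - a), I (a + b))]"
| "brk (I b) (L a) = [(- of_int (b - a), I (a + b))]"
| "brk (L a) (J b) = [(of_int (b - a), J (a + b))]"
| "brk (J b) (L a) = [(- of_int (b - a), J (a + b))]"
| "brk (H a) (I b) = [(1, I (a + b))]"
| "brk (I b) (H a) = [(-1, I (a + b))]"
| "brk (H a) (J b) = [(-1, J (a + b))]"
| "brk (J b) (H a) = [(1, J (a + b))]"
| "brk _ _ = []"

text \<open>Basis of the subalgebra G^(m,n).\<close>
definition gens :: "nat \<Rightarrow> nat \<Rightarrow> gb set" where
  "gens m n = {b. case b of L k \<Rightarrow> k \<ge> int m | H k \<Rightarrow> k \<ge> int m
                 | I k \<Rightarrow> k \<ge> int n | J k \<Rightarrow> k \<ge> int n | _ \<Rightarrow> True}"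

definition lin :: "(gb \<Rightarrow> complex) \<Rightarrow> (complex \<times> gb) list \<Rightarrow> complex" where
  "lin \<psi> xs = sum_list (map (\<lambda>(c, b). c * \<psi> b) xs)"

text \<open>Whittaker function on G^(m,n): given by its values on the basis of G^(m,n),
  its linear extension vanishes on [G^(m,n), G^(m,n)].\<close>
definition whittaker :: "nat \<Rightarrow> nat \<Rightarrow> (gb \<Rightarrow> complex) \<Rightarrow> bool" where
  "whittaker m n \<psi> \<longleftrightarrow> (\<forall>x\<in>gens m n. \<forall>y\<in>gens m n. lin \<psi> (brk x y) = 0)"

text \<open>Free associative algebra on the basis of G: functions from words to coefficients.\<close>
type_synonym fa = "gb list \<Rightarrow> complex"

definition mono :: "gb list \<Rightarrow> fa" where
  "mono w = (\<lambda>u. if u = w then 1 else 0)"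

definition fmul :: "fa \<Rightarrow> fa \<Rightarrow> fa" where
  "fmul p q = (\<lambda>u. \<Sum>k\<in>{0..length u}. p (take k u) * q (drop k u))"

definition emb :: "(complex \<times> gb) list \<Rightarrow> fa" where
  "emb xs = (\<lambda>u. sum_list (map (\<lambda>(c, b). if u = [b] then c else 0) xs))"

definition smul :: "complex \<Rightarrow> fa \<Rightarrow> fa" where
  "smul c p = (\<lambda>u. c * p u)"

definition fadd :: "fa \<Rightarrow> fa \<Rightarrow> fa" where
  "fadd p q = (\<lambda>u. p u + q u)"

definition fsub :: "fa \<Rightarrow> fa \<Rightarrow> fa" where
  "fsub p q = (\<lambda>u. p u - q u)"

inductive_set cspan :: "fa set \<Rightarrow> fa set" for S where
  zero: "(\<lambda>_. 0) \<in> cspan S"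
| base: "x \<in> S \<Longrightarrow> x \<in> cspan S"
| add: "x \<in> cspan S \<Longrightarrow> y \<in> cspan S \<Longrightarrow> fadd x y \<in> cspan S"
| scale: "x \<in> cspan S \<Longrightarrow> smul c x \<in> cspan S"

text \<open>Polynomials in the basis of G^(m,0) (the tensor algebra T(G^(m,0))).\<close>
definition talg :: "nat \<Rightarrow> fa set" where
  "talg m = {p. finite {w. p w \<noteq> 0} \<and> (\<forall>w. p w \<noteq> 0 \<longrightarrow> set w \<subseteq> gens m 0)}"

text \<open>Kernel of T(G^(m,0)) \<rightarrow> U(G^(m,0)) \<otimes>_{U(G^(m,n))} C w_psi:
  the two-sided ideal of the Lie relations plus the left ideal generated by x - psi(x), x in G^(m,n).\<close>
definition relel :: "gb \<Rightarrow> gb \<Rightarrow> fa" where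
  "relel x y = fsub (fsub (mono [x, y]) (mono [y, x])) (emb (brk x y))"

definition indker :: "nat \<Rightarrow> nat \<Rightarrow> (gb \<Rightarrow> complex) \<Rightarrow> fa set" where
  "indker m n \<psi> = cspan
     ({fmul (mono a) (fmul (relel x y) (mono b)) | a b x y.
         set a \<subseteq> gens m 0 \<and> set b \<subseteq> gens m 0 \<and> x \<in> gens m 0 \<and> y \<in> gens m 0}
    \<union> {fmul (mono a) (fsub (mono [x]) (smul (\<psi> x) (mono []))) | a x.
         set a \<subseteq> gens m 0 \<and> x \<in> gens m n})"

text \<open>The induced module W' is talg m / indker m n psi, with basis element x of G^(m,0)
  acting by left multiplication with mono [x].  Irreducibility: W' is nonzero and every
  G^(m,0)-submodule (= subspace S with indker \<subseteq> S \<subseteq> talg, stable under the action) is 0 or W'.\<close>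
definition induced_irreducible :: "nat \<Rightarrow> nat \<Rightarrow> (gb \<Rightarrow> complex) \<Rightarrow> bool" where
  "induced_irreducible m n \<psi> \<longleftrightarrow>
     indker m n \<psi> \<noteq> talg m \<and>
     (\<forall>S. indker m n \<psi> \<subseteq> S \<and> S \<subseteq> talg m \<and>
          (\<forall>p\<in>S. \<forall>q\<in>S. fadd p q \<in> S) \<and> (\<forall>p\<in>S. \<forall>c. smul c p \<in> S) \<and>
          (\<forall>x\<in>gens m 0. \<forall>p\<in>S. fmul (mono [x]) p \<in> S)
        \<longrightarrow> S = indker m n \<psi> \<or> S = talg m)"

text \<open>In W', x acts on the class of p as the scalar c.\<close>
definition acts_as :: "nat \<Rightarrow> nat \<Rightarrow> (gb \<Rightarrow> complex) \<Rightarrow> gb \<Rightarrow> complex \<Rightarrow> fa \<Rightarrow> bool" where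
  "acts_as m n \<psi> x c p \<longleftrightarrow> fsub (fmul (mono [x]) p) (smul c p) \<in> indker m n \<psi>"

end

theory Submission
  imports Defs "HOL-Library.Multiset"
begin


lemma fmul_mono_left:
  "fmul (mono a) q = (\<lambda>u. if take (length a) u = a then q (drop (length a) u) else 0)"
proof (rule ext)
  fix u
  show "fmul (mono a) q u = (if take (length a) u = a then q (drop (length a) u) else 0)"
  proof (cases "take (length a) u = a")
    case True
    then have "length (take (length a) u) = length a" by simp
    then have la: "length a \<le> length u" by simp
    have "fmul (mono a) q u = (\<Sum>k\<in>{0..length u}. if k = length a then q (drop k u) else 0)"
      unfolding fmul_def mono_def
      by (rule sum.cong) (use True in auto)
    also have "\<dots> = q (drop (length a) u)" using la by simp
    finally show ?thesis using True by simp
  next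
    case False
    have "fmul (mono a) q u = (\<Sum>k\<in>{0..length u}. 0)"
      unfolding fmul_def mono_def
      by (rule sum.cong) (use False in auto)
    then show ?thesis using False by simp
  qed
qed

lemma fmul_mono_right:
  "fmul q (mono b) = (\<lambda>u. if drop (length u - length b) u = b then q (take (length u - length b) u) else 0)"
proof (rule ext)
  fix u
  show "fmul q (mono b) u = (if drop (length u - length b) u = b then q (take (length u - length b) u) else 0)"
  proof (cases "drop (length u - length b) u = b")
    case True
    then have la: "length b \<le> length u" by (metis diff_le_self length_drop)
    have "fmul q (mono b) u = (\<Sum>k\<in>{0..length u}. if k = length u - length b then q (take k u) else 0)"
      unfolding fmul_def mono_def
    proof (rule sum.cong)
      fix k assume k: "k \<in> {0..length u}"
      show "q (take k u) * (if drop k u = b then 1 else 0) = (if k = length u - length b then q (take k u) else 0)"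
      proof (cases "k = length u - length b")
        case True then show ?thesis using \<open>drop (length u - length b) u = b\<close> by simp
      next
        case False
        then have "drop k u \<noteq> b" using k la by (metis atLeastAtMost_iff diff_diff_cancel length_drop)
        then show ?thesis using False by simp
      qed
    qed simp
    also have "\<dots> = q (take (length u - length b) u)" using la by simp
    finally show ?thesis using True by simp
  next
    case False
    have "fmul q (mono b) u = (\<Sum>k\<in>{0..length u}. 0)"
      unfolding fmul_def mono_def
    proof (rule sum.cong)
      fix k assume k: "k \<in> {0..length u}"
      have "drop k u \<noteq> b"
      proof
        assume d: "drop k u = b"
        then have "length u - length b = k" using k by auto
        then show False using d False by simp
      qed
      then show "q (take k u) * (if drop k u = b then 1 else 0) = 0" by simp
    qed simp
    then show ?thesis using False by simp
  qed
qed

lemma mono_mono: "fmul (mono a) (mono b) = mono (a @ b)"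
  unfolding fmul_mono_left by (rule ext) (auto simp: mono_def append_eq_conv_conj, metis append_take_drop_id)

lemma fmul_mono_Nil: "fmul (mono []) p = p"
  unfolding fmul_mono_left by simp

lemma fmul_assoc_mono: "fmul (mono a) (fmul (mono b) p) = fmul (mono (a @ b)) p"
proof -
  have "(if take (length a) u = a then if take (length b) (drop (length a) u) = b
          then p (drop (length b) (drop (length a) u)) else 0 else 0) =
        (if take (length (a @ b)) u = a @ b then p (drop (length (a @ b)) u) else 0)" for u
  proof (cases "take (length a) u = a")
    case True then show ?thesis by (simp add: take_add add.commute)
  next
    case False
    have "take (length (a @ b)) u \<noteq> a @ b"
    proof
      assume "take (length (a @ b)) u = a @ b"
      then have "take (length a) (take (length (a @ b)) u) = a" by simp
      then show False using False by (simp add: min_def)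
    qed
    then show ?thesis using False by simp
  qed
  then show ?thesis unfolding fmul_mono_left by (intro ext) simp
qed


definition isV :: "nat \<Rightarrow> gb \<Rightarrow> bool" where
  "isV n b = (case b of I j \<Rightarrow> 0 \<le> j \<and> j < int n | J j \<Rightarrow> 0 \<le> j \<and> j < int n | _ \<Rightarrow> False)"

definition Zs :: "nat \<Rightarrow> nat \<Rightarrow> gb \<Rightarrow> bool" where
  "Zs m n b = (case b of L t \<Rightarrow> int (m + n) \<le> t | H t \<Rightarrow> int (m + n) \<le> t
     | I t \<Rightarrow> int n \<le> t | J t \<Rightarrow> int n \<le> t | _ \<Rightarrow> True)"

lemma gens_simps[simp]:
  "L k \<in> gens m n \<longleftrightarrow> int m \<le> k" "H k \<in> gens m n \<longleftrightarrow> int m \<le> k"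
  "I k \<in> gens m n \<longleftrightarrow> int n \<le> k" "J k \<in> gens m n \<longleftrightarrow> int n \<le> k"
  "C1 \<in> gens m n" "C2 \<in> gens m n" "C3 \<in> gens m n"
  by (auto simp: gens_def)

lemma isV_simps[simp]:
  "isV n (L k) = False" "isV n (H k) = False" "isV n (I k) = (0 \<le> k \<and> k < int n)"
  "isV n (J k) = (0 \<le> k \<and> k < int n)" "isV n C1 = False" "isV n C2 = False" "isV n C3 = False"
  by (auto simp: isV_def)

lemma Zs_simps[simp]:
  "Zs m n (L k) = (int (m + n) \<le> k)" "Zs m n (H k) = (int (m + n) \<le> k)" "Zs m n (I k) = (int n \<le> k)"
  "Zs m n (J k) = (int n \<le> k)" "Zs m n C1" "Zs m n C2" "Zs m n C3"
  by (auto simp: Zs_def)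

lemma gens_mn0: "b \<in> gens m 0 \<Longrightarrow> b \<in> gens m n \<longleftrightarrow> \<not> isV n b"
  by (cases b) auto

lemma isV_gens: "isV n b \<Longrightarrow> b \<in> gens m 0"
  by (cases b) auto

lemma Zs_gens: "Zs m n b \<Longrightarrow> b \<in> gens m n"
  by (cases b) auto

lemma Zs_notV: "Zs m n b \<Longrightarrow> \<not> isV n b"
  by (cases b) auto

lemma gmn_gm0: "b \<in> gens m n \<Longrightarrow> b \<in> gens m 0"
  by (cases b) auto

lemma brk_VV: "isV n x \<Longrightarrow> isV n y \<Longrightarrow> brk x y = []"
  by (cases x; cases y) auto

locale W =
  fixes m n :: nat and \<psi> :: "gb \<Rightarrow> complex"
  assumes mpos: "0 < m" and nm: "n \<le> m" and wh: "whittaker m n \<psi>"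
begin

lemma W1: "x \<in> gens m n \<Longrightarrow> y \<in> gens m n \<Longrightarrow> lin \<psi> (brk x y) = 0"
  using wh unfolding whittaker_def by blast

lemma psiI_hi: "int (m + n) \<le> t \<Longrightarrow> \<psi> (I t) = 0"
  using W1[of "H (int m)" "I (t - int m)"] by (simp add: lin_def)

lemma psiJ_hi: "int (m + n) \<le> t \<Longrightarrow> \<psi> (J t) = 0"
  using W1[of "H (int m)" "J (t - int m)"] by (simp add: lin_def)

lemma Z_closed1: "Zs m n z \<Longrightarrow> y \<in> gens m 0 \<Longrightarrow> p \<in> set (brk z y) \<Longrightarrow> Zs m n (snd p)"
  using mpos nm by (cases z; cases y) (auto split: if_splits)

lemma Z_closed2: "Zs m n z \<Longrightarrow> y \<in> gens m 0 \<Longrightarrow> lin \<psi> (brk z y) = 0"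
proof (cases "y \<in> gens m n")
  case True
  assume "Zs m n z" then show ?thesis using W1 True Zs_gens by blast
next
  case False
  assume z: "Zs m n z" and y: "y \<in> gens m 0"
  then have "isV n y" using gens_mn0 False by blast
  then show ?thesis using z nm mpos
    by (cases z; cases y) (auto simp: lin_def psiI_hi psiJ_hi)
qed

lemma brk_Z: "x \<in> gens m 0 \<Longrightarrow> y \<in> gens m n \<Longrightarrow> p \<in> set (brk x y) \<union> set (brk y x) \<Longrightarrow> Zs m n (snd p)"
  using mpos nm by (cases x; cases y) (auto split: if_splits)

end


definition poly :: "(complex \<times> gb list) list \<Rightarrow> fa" where
  "poly ws = (\<lambda>u. sum_list (map (\<lambda>(c, w). c * mono w u) ws))"

lemma poly_Nil[simp]: "poly [] = (\<lambda>_. 0)" by (simp add: poly_def)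
lemma poly_Cons: "poly ((c, w) # ws) = (\<lambda>u. c * mono w u + poly ws u)"
  by (simp add: poly_def)
lemma poly_append: "poly (xs @ ys) = (\<lambda>u. poly xs u + poly ys u)"
  by (simp add: poly_def)

lemma fmul_add_left: "fmul (\<lambda>u. p u + q u) r = (\<lambda>u. fmul p r u + fmul q r u)"
  by (simp add: fmul_def distrib_right sum.distrib)
lemma fmul_scale_left: "fmul (\<lambda>u. c * p u) r = (\<lambda>u. c * fmul p r u)"
  by (simp add: fmul_def sum_distrib_left mult.assoc)
lemma fmul_zero_left: "fmul (\<lambda>_. 0) r = (\<lambda>_. 0)"
  by (simp add: fmul_def)

lemma fmul_poly_right: "fmul (poly ws) (mono b) = poly (map (\<lambda>(c, w). (c, w @ b)) ws)"
proof (induction ws)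
  case Nil then show ?case by (simp add: fmul_zero_left)
next
  case (Cons cw ws)
  obtain c w where cw: "cw = (c, w)" by force
  have "fmul (poly (cw # ws)) (mono b) = (\<lambda>u. fmul (\<lambda>u. c * mono w u) (mono b) u + fmul (poly ws) (mono b) u)"
    unfolding cw poly_Cons by (rule fmul_add_left)
  also have "\<dots> = (\<lambda>u. c * mono (w @ b) u + fmul (poly ws) (mono b) u)"
    by (simp add: fmul_scale_left mono_mono)
  finally show ?case using Cons by (simp add: cw poly_Cons)
qed

lemma fmul_mono_poly: "fmul (mono a) (poly ws) = poly (map (\<lambda>(c, w). (c, a @ w)) ws)"
proof (induction ws)
  case Nil then show ?case by (simp add: fmul_mono_left)
next
  case (Cons cw ws)
  obtain c w where cw: "cw = (c, w)" by force
  have "fmul (mono a) (poly (cw # ws)) = (\<lambda>u. c * fmul (mono a) (mono w) u + fmul (mono a) (poly ws) u)"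
    unfolding cw poly_Cons fmul_mono_left by auto
  then show ?case using Cons by (simp add: cw poly_Cons mono_mono)
qed

lemma emb_poly: "emb xs = poly (map (\<lambda>(c, b). (c, [b])) xs)"
proof (rule ext)
  fix u show "emb xs u = poly (map (\<lambda>(c, b). (c, [b])) xs) u"
    by (induction xs) (auto simp: emb_def poly_def mono_def)
qed

lemma poly_neg: "poly (map (\<lambda>(c, w). (- c, w)) ws) = (\<lambda>u. - poly ws u)"
  by (induction ws) (auto simp: poly_Cons)

lemma relel_poly: "relel x y = poly ([(1, [x, y]), (-1, [y, x])] @ map (\<lambda>(c, b). (- c, [b])) (brk x y))"
proof -
  have e: "map (\<lambda>(c, b). (- c, [b])) xs = map (\<lambda>(c, w). (- c, w)) (map (\<lambda>(c, b). (c, [b])) xs)" for xs :: "(complex \<times> gb) list"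
    by (induction xs) auto
  show ?thesis
    unfolding relel_def fsub_def emb_poly poly_append e poly_neg
    by (simp add: poly_Cons)
qed

lemma gen1_poly: "fmul (mono a) (fmul (relel x y) (mono b)) =
   poly ([(1, a @ x # y # b), (-1, a @ y # x # b)] @ map (\<lambda>(c, \<beta>). (- c, a @ \<beta> # b)) (brk x y))"
  unfolding relel_poly fmul_poly_right fmul_mono_poly
  by (simp add: comp_def case_prod_unfold)

lemma gen2_poly: "fmul (mono a) (fsub (mono [x]) (smul c (mono []))) = poly [(1, a @ [x]), (- c, a)]"
  unfolding fmul_mono_left fsub_def smul_def by (rule ext) (auto simp: poly_Cons mono_def append_eq_conv_conj, (metis append_take_drop_id)+)

lemma sl_diff: "sum_list (map (\<lambda>(c, \<beta>). c * (f \<beta> - g \<beta>)) xs) =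
   sum_list (map (\<lambda>(c, \<beta>). c * f \<beta>) xs) - sum_list (map (\<lambda>(c, \<beta>). (c::complex) * g \<beta>) xs)"
  by (induction xs) (auto simp: algebra_simps)

lemma sl_lin: "sum_list (map (\<lambda>(c, \<beta>). c * (\<psi> \<beta> * t)) xs) = lin \<psi> xs * (t::complex)"
  by (induction xs) (auto simp: lin_def algebra_simps)

lemma sl_add: "sum_list (map (\<lambda>(c, \<beta>). c * (f \<beta> + g \<beta>)) xs) =
   sum_list (map (\<lambda>(c, \<beta>). c * f \<beta>) xs) + sum_list (map (\<lambda>(c, \<beta>). (c::complex) * g \<beta>) xs)"
  by (induction xs) (auto simp: algebra_simps)

context W begin

abbreviation K where "K \<equiv> indker m n \<psi>"

lemma K_zero: "(\<lambda>_. 0) \<in> K" unfolding indker_def by (rule cspan.zero)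
lemma K_add: "p \<in> K \<Longrightarrow> q \<in> K \<Longrightarrow> (\<lambda>u. p u + q u) \<in> K"
  using cspan.add[of p _ q] unfolding indker_def fadd_def by blast
lemma K_scale: "p \<in> K \<Longrightarrow> (\<lambda>u. c * p u) \<in> K"
  using cspan.scale[of p _ c] unfolding indker_def smul_def by blast
lemma K_diff: "p \<in> K \<Longrightarrow> q \<in> K \<Longrightarrow> (\<lambda>u. p u - q u) \<in> K"
proof -
  assume "p \<in> K" "q \<in> K"
  then have "(\<lambda>u. p u + (-1) * q u) \<in> K" using K_add K_scale by blast
  then show ?thesis by simp
qed
lemma K_fsub: "p \<in> K \<Longrightarrow> q \<in> K \<Longrightarrow> fsub p q \<in> K"
  using K_diff unfolding fsub_def by blast

lemma K_sum: "finite A \<Longrightarrow> (\<And>i. i \<in> A \<Longrightarrow> f i \<in> K) \<Longrightarrow> (\<lambda>u. \<Sum>i\<in>A. f i u) \<in> K"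
proof (induction A rule: finite_induct)
  case empty then show ?case using K_zero by simp
next
  case (insert x F)
  then have "(\<lambda>u. f x u + (\<Sum>i\<in>F. f i u)) \<in> K" using K_add by blast
  then show ?case using insert by simp
qed

lemma K_sl: "(\<And>p. p \<in> set xs \<Longrightarrow> F (snd p) \<in> K) \<Longrightarrow>
   (\<lambda>u. sum_list (map (\<lambda>(c, \<beta>). c * F \<beta> u) xs)) \<in> K"
proof (induction xs)
  case Nil then show ?case using K_zero by simp
next
  case (Cons p xs)
  obtain c \<beta> where p: "p = (c, \<beta>)" by force
  have h1: "F \<beta> \<in> K" using Cons.prems[of p] p by simp
  have h2: "(\<lambda>u. sum_list (map (\<lambda>(c, \<beta>). c * F \<beta> u) xs)) \<in> K" using Cons by simp
  have "(\<lambda>u. c * F \<beta> u + sum_list (map (\<lambda>(c, \<beta>). c * F \<beta> u) xs)) \<in> K"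
    using h1 h2 by (intro K_add K_scale) auto
  then show ?case by (simp add: p)
qed

lemma K_gen1:
  assumes "set a \<subseteq> gens m 0" "set b \<subseteq> gens m 0" "x \<in> gens m 0" "y \<in> gens m 0"
  shows "poly ([(1, a @ x # y # b), (-1, a @ y # x # b)] @ map (\<lambda>(c, \<beta>). (- c, a @ \<beta> # b)) (brk x y)) \<in> K"
proof -
  have "fmul (mono a) (fmul (relel x y) (mono b)) \<in> K"
    unfolding indker_def by (rule cspan.base) (use assms in blast)
  then show ?thesis by (simp add: gen1_poly)
qed

lemma K_gen2:
  assumes "set a \<subseteq> gens m 0" "x \<in> gens m n"
  shows "poly [(1, a @ [x]), (- \<psi> x, a)] \<in> K"
proof -
  have "fmul (mono a) (fsub (mono [x]) (smul (\<psi> x) (mono []))) \<in> K"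
    unfolding indker_def by (rule cspan.base) (use assms in blast)
  then show ?thesis by (simp add: gen2_poly)
qed

lemma K_left: "p \<in> K \<Longrightarrow> set a \<subseteq> gens m 0 \<Longrightarrow> fmul (mono a) p \<in> K"
  unfolding indker_def
proof (induction p rule: cspan.induct)
  case zero then show ?case by (simp add: fmul_mono_left cspan.zero)
next
  case (base x)
  then show ?case
    by (auto simp: fmul_assoc_mono intro!: cspan.base) (metis Un_subset_iff set_append)+
next
  case (add x y)
  have "fmul (mono a) (fadd x y) = fadd (fmul (mono a) x) (fmul (mono a) y)"
    by (auto simp: fmul_mono_left fadd_def)
  then show ?case using add by (simp add: cspan.add)
next
  case (scale x c)
  have "fmul (mono a) (smul c x) = smul c (fmul (mono a) x)"
    by (auto simp: fmul_mono_left smul_def)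
  then show ?case using scale by (simp add: cspan.scale)
qed

end


lemma poly_map_neg: "poly (map (\<lambda>(c, \<beta>). (- c, h \<beta>)) xs) u = - sum_list (map (\<lambda>(c, \<beta>). c * mono (h \<beta>) u) xs)"
  by (induction xs) (auto simp: poly_Cons)

lemma p_expand: "finite {w. p w \<noteq> 0} \<Longrightarrow> p u = (\<Sum>w\<in>{w. p w \<noteq> 0}. p w * mono w u)"
proof -
  assume f: "finite {w. p w \<noteq> 0}"
  have "(\<Sum>w\<in>{w. p w \<noteq> 0}. p w * mono w u) = (\<Sum>w\<in>{w. p w \<noteq> 0}. if w = u then p u else 0)"
    by (rule sum.cong) (auto simp: mono_def)
  also have "\<dots> = p u" using f by (simp add: sum.delta)
  finally show ?thesis by simp
qed

lemma lmul_expand: "finite {w. p w \<noteq> 0} \<Longrightarrow>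
   fmul (mono [x]) p u = (\<Sum>w\<in>{w. p w \<noteq> 0}. p w * mono (x # w) u)"
proof -
  assume f: "finite {w. p w \<noteq> 0}"
  have "mono (x # w) u = (if take 1 u = [x] then mono w (drop 1 u) else 0)" for w
    by (cases u) (auto simp: mono_def)
  then have "(\<Sum>w\<in>{w. p w \<noteq> 0}. p w * mono (x # w) u) =
     (\<Sum>w\<in>{w. p w \<noteq> 0}. p w * (if take 1 u = [x] then mono w (drop 1 u) else 0))"
    by (simp add: fmul_mono_left)
  also have "\<dots> = (if take 1 u = [x] then p (drop 1 u) else 0)"
    using p_expand[OF f, of "drop 1 u"] by (cases "take 1 u = [x]") auto
  finally show ?thesis by (simp add: fmul_mono_left)
qed

context W begin

lemma Zlemma: "Zs m n z \<Longrightarrow> set u \<subseteq> gens m 0 \<Longrightarrow> poly [(1, z # u), (- \<psi> z, u)] \<in> K"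
proof (induction u arbitrary: z)
  case Nil
  then show ?case using K_gen2[of "[]" z] Zs_gens by simp
next
  case (Cons y u')
  have zg: "z \<in> gens m 0" using Cons.prems Zs_gens gmn_gm0 by blast
  have yg: "y \<in> gens m 0" and ug: "set u' \<subseteq> gens m 0" using Cons.prems by auto
  have A: "poly ([(1, z # y # u'), (-1, y # z # u')] @ map (\<lambda>(c, \<beta>). (- c, \<beta> # u')) (brk z y)) \<in> K"
    using K_gen1[of "[]" u' z y] zg yg ug by simp
  have B: "poly [(1, y # z # u'), (- \<psi> z, y # u')] \<in> K"
    using K_left[OF Cons.IH[OF Cons.prems(1) ug], of "[y]"] yg by (simp add: fmul_mono_poly)
  have Cs: "(\<lambda>w. sum_list (map (\<lambda>(c, \<beta>). c * poly [(1, \<beta> # u'), (- \<psi> \<beta>, u')] w) (brk z y))) \<in> K"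
  proof (rule K_sl)
    fix p assume "p \<in> set (brk z y)"
    then have "Zs m n (snd p)" using Z_closed1 Cons.prems(1) yg by blast
    then show "poly [(1, snd p # u'), (- \<psi> (snd p), u')] \<in> K" using Cons.IH ug by blast
  qed
  have l0: "lin \<psi> (brk z y) = 0" using Z_closed2 Cons.prems(1) yg by blast
  have "poly [(1, z # y # u'), (- \<psi> z, y # u')] = (\<lambda>w.
      poly ([(1, z # y # u'), (-1, y # z # u')] @ map (\<lambda>(c, \<beta>). (- c, \<beta> # u')) (brk z y)) w +
      poly [(1, y # z # u'), (- \<psi> z, y # u')] w +
      sum_list (map (\<lambda>(c, \<beta>). c * poly [(1, \<beta> # u'), (- \<psi> \<beta>, u')] w) (brk z y)))"
  proof (rule ext)
    fix w
    have e1: "sum_list (map (\<lambda>(c, \<beta>). c * poly [(1, \<beta> # u'), (- \<psi> \<beta>, u')] w) (brk z y)) =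
       sum_list (map (\<lambda>(c, \<beta>). c * mono (\<beta> # u') w) (brk z y)) - lin \<psi> (brk z y) * mono u' w"
      using sl_diff[of "\<lambda>\<beta>. mono (\<beta> # u') w" "\<lambda>\<beta>. \<psi> \<beta> * mono u' w" "brk z y"]
      by (simp add: poly_Cons sl_lin)
    show "poly [(1, z # y # u'), (- \<psi> z, y # u')] w = 
      poly ([(1, z # y # u'), (-1, y # z # u')] @ map (\<lambda>(c, \<beta>). (- c, \<beta> # u')) (brk z y)) w +
      poly [(1, y # z # u'), (- \<psi> z, y # u')] w +
      sum_list (map (\<lambda>(c, \<beta>). c * poly [(1, \<beta> # u'), (- \<psi> \<beta>, u')] w) (brk z y))"
      unfolding e1 l0 poly_append by (simp add: poly_Cons poly_map_neg)
  qed
  then show ?case using K_add[OF K_add[OF A B] Cs] by simp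
qed

lemma acts: assumes "Zs m n x" "p \<in> talg m"
  shows "fsub (fmul (mono [x]) p) (smul (\<psi> x) p) \<in> K"
proof -
  have f: "finite {w. p w \<noteq> 0}" and sg: "\<And>w. p w \<noteq> 0 \<Longrightarrow> set w \<subseteq> gens m 0"
    using assms(2) unfolding talg_def by auto
  have "fsub (fmul (mono [x]) p) (smul (\<psi> x) p) =
     (\<lambda>u. \<Sum>w\<in>{w. p w \<noteq> 0}. p w * poly [(1, x # w), (- \<psi> x, w)] u)"
    unfolding fsub_def smul_def
  proof (rule ext)
    fix u
    have "(\<Sum>w\<in>{w. p w \<noteq> 0}. p w * poly [(1, x # w), (- \<psi> x, w)] u) =
        (\<Sum>w\<in>{w. p w \<noteq> 0}. p w * mono (x # w) u - \<psi> x * (p w * mono w u))"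
      by (rule sum.cong) (auto simp: poly_Cons algebra_simps)
    also have "\<dots> = fmul (mono [x]) p u - \<psi> x * p u"
      unfolding sum_subtractf sum_distrib_left[symmetric] lmul_expand[OF f] p_expand[OF f, of u] ..
    finally show "fmul (mono [x]) p u - \<psi> x * p u = (\<Sum>w\<in>{w. p w \<noteq> 0}. p w * poly [(1, x # w), (- \<psi> x, w)] u)"
      by simp
  qed
  also have "\<dots> \<in> K"
    by (rule K_sum[OF f]) (use Zlemma assms sg in \<open>auto intro: K_scale\<close>)
  finally show ?thesis .
qed

end


type_synonym pf = "gb multiset \<Rightarrow> complex"

definition Vset :: "nat \<Rightarrow> gb set" where "Vset n = {b. isV n b}"

lemma Vset_eq: "Vset n = I ` {0..<int n} \<union> J ` {0..<int n}"
  unfolding Vset_def isV_def by (auto split: gb.splits)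

lemma finite_Vset[simp]: "finite (Vset n)" unfolding Vset_eq by simp

definition deriv :: "gb \<Rightarrow> pf \<Rightarrow> pf" where
  "deriv v f = (\<lambda>N. of_nat (count N v + 1) * f (N + {#v#}))"

definition Dop :: "(gb \<Rightarrow> complex) \<Rightarrow> nat \<Rightarrow> gb \<Rightarrow> pf \<Rightarrow> pf" where
  "Dop \<psi> n x f = (\<lambda>N. \<Sum>v\<in>Vset n. lin \<psi> (brk x v) * deriv v f N)"

definition rho :: "(gb \<Rightarrow> complex) \<Rightarrow> nat \<Rightarrow> gb \<Rightarrow> pf \<Rightarrow> pf" where
  "rho \<psi> n x f = (if isV n x then (\<lambda>N. if x \<in># N then f (N - {#x#}) else 0)
      else (\<lambda>N. \<psi> x * f N + Dop \<psi> n x f N))"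

definition one :: pf where "one = (\<lambda>N. if N = {#} then 1 else 0)"

definition RL :: "(gb \<Rightarrow> complex) \<Rightarrow> nat \<Rightarrow> gb list \<Rightarrow> pf \<Rightarrow> pf" where
  "RL \<psi> n a f = foldr (rho \<psi> n) a f"

lemma RL_Nil[simp]: "RL \<psi> n [] f = f" by (simp add: RL_def)
lemma RL_Cons[simp]: "RL \<psi> n (x # a) f = rho \<psi> n x (RL \<psi> n a f)" by (simp add: RL_def)
lemma RL_append: "RL \<psi> n (a @ b) f = RL \<psi> n a (RL \<psi> n b f)" by (simp add: RL_def)

lemma deriv_add: "deriv v (\<lambda>N. f N + g N) = (\<lambda>N. deriv v f N + deriv v g N)"
  by (simp add: deriv_def algebra_simps)
lemma deriv_scale: "deriv v (\<lambda>N. c * f N) = (\<lambda>N. c * deriv v f N)"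
  by (simp add: deriv_def algebra_simps)
lemma deriv_sum: "deriv v (\<lambda>N. \<Sum>i\<in>A. g i N) N = (\<Sum>i\<in>A. deriv v (g i) N)"
  by (simp add: deriv_def sum_distrib_left)
lemma deriv_comm: "deriv v (deriv w f) = deriv w (deriv v f)"
  by (rule ext) (auto simp: deriv_def add.commute add.left_commute add_mset_commute)

lemma Dop_add: "Dop \<psi> n x (\<lambda>N. f N + g N) = (\<lambda>N. Dop \<psi> n x f N + Dop \<psi> n x g N)"
  by (simp add: Dop_def deriv_add algebra_simps sum.distrib)
lemma Dop_scale: "Dop \<psi> n x (\<lambda>N. c * f N) = (\<lambda>N. c * Dop \<psi> n x f N)"
  by (simp add: Dop_def deriv_scale algebra_simps sum_distrib_left)
lemma Dop_comm: "Dop \<psi> n x (Dop \<psi> n y f) = Dop \<psi> n y (Dop \<psi> n x f)"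
proof (rule ext)
  fix N
  have "Dop \<psi> n x (Dop \<psi> n y f) N = (\<Sum>v\<in>Vset n. \<Sum>w\<in>Vset n. lin \<psi> (brk x v) * lin \<psi> (brk y w) * deriv v (deriv w f) N)"
    unfolding Dop_def
    by (simp add: deriv_sum deriv_scale sum_distrib_left mult.assoc)
  also have "\<dots> = (\<Sum>w\<in>Vset n. \<Sum>v\<in>Vset n. lin \<psi> (brk x v) * lin \<psi> (brk y w) * deriv w (deriv v f) N)"
    by (subst sum.swap) (simp add: deriv_comm)
  also have "\<dots> = Dop \<psi> n y (Dop \<psi> n x f) N"
    unfolding Dop_def
    by (simp add: deriv_sum deriv_scale sum_distrib_left mult.assoc mult.left_commute)
  finally show "Dop \<psi> n x (Dop \<psi> n y f) N = Dop \<psi> n y (Dop \<psi> n x f) N" .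
qed

lemma rho_add: "rho \<psi> n x (\<lambda>N. f N + g N) = (\<lambda>N. rho \<psi> n x f N + rho \<psi> n x g N)"
  by (simp add: rho_def Dop_add algebra_simps fun_eq_iff)
lemma rho_scale: "rho \<psi> n x (\<lambda>N. c * f N) = (\<lambda>N. c * rho \<psi> n x f N)"
  by (simp add: rho_def Dop_scale algebra_simps fun_eq_iff)
lemma rho_zero: "rho \<psi> n x (\<lambda>_. 0) = (\<lambda>_. 0)"
  using rho_scale[of \<psi> n x 0 "\<lambda>_. 0"] by simp
lemma rho_diff: "rho \<psi> n x (\<lambda>N. f N - g N) = (\<lambda>N. rho \<psi> n x f N - rho \<psi> n x g N)"
proof -
  have "rho \<psi> n x (\<lambda>N. f N + (-1) * g N) = (\<lambda>N. rho \<psi> n x f N + (-1) * rho \<psi> n x g N)"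
    by (simp only: rho_add rho_scale)
  then show ?thesis by simp
qed
lemma rho_sum: "rho \<psi> n x (\<lambda>N. \<Sum>i\<in>A. g i N) = (\<lambda>N. \<Sum>i\<in>A. rho \<psi> n x (g i) N)"
proof (induction A rule: infinite_finite_induct)
  case (infinite A) then show ?case by (simp add: rho_zero)
next
  case empty then show ?case by (simp add: rho_zero)
next
  case (insert a A) then show ?case by (simp add: rho_add)
qed

lemma RL_add: "RL \<psi> n a (\<lambda>N. f N + g N) = (\<lambda>N. RL \<psi> n a f N + RL \<psi> n a g N)"
  by (induction a) (simp_all add: rho_add)
lemma RL_scale: "RL \<psi> n a (\<lambda>N. c * f N) = (\<lambda>N. c * RL \<psi> n a f N)"
  by (induction a) (simp_all add: rho_scale)
lemma RL_zero: "RL \<psi> n a (\<lambda>_. 0) = (\<lambda>_. 0)"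
  by (induction a) (simp_all add: rho_zero)
lemma RL_diff: "RL \<psi> n a (\<lambda>N. f N - g N) = (\<lambda>N. RL \<psi> n a f N - RL \<psi> n a g N)"
  by (induction a) (simp_all add: rho_diff)
lemma RL_sl: "RL \<psi> n a (\<lambda>N. sum_list (map (\<lambda>(c, \<beta>). c * h \<beta> N) xs)) =
   (\<lambda>N. sum_list (map (\<lambda>(c, \<beta>). c * RL \<psi> n a (h \<beta>) N) xs))"
proof (induction xs)
  case Nil then show ?case by (simp add: RL_zero)
next
  case (Cons p xs)
  obtain c \<beta> where p: "p = (c, \<beta>)" by force
  have "RL \<psi> n a (\<lambda>N. c * h \<beta> N + sum_list (map (\<lambda>(c, \<beta>). c * h \<beta> N) xs)) =
     (\<lambda>N. c * RL \<psi> n a (h \<beta>) N + RL \<psi> n a (\<lambda>N. sum_list (map (\<lambda>(c, \<beta>). c * h \<beta> N) xs)) N)"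
    by (simp add: RL_add RL_scale)
  then show ?case using Cons by (simp add: p)
qed

lemma lin_antisym: "lin \<psi> (brk x y) = - lin \<psi> (brk y x)"
  apply (cases x; cases y)
  apply (auto simp: lin_def algebra_simps power3_eq_cube power2_eq_square add_eq_0_iff)
  by (simp_all add: field_simps)

context W begin

lemma rho_Z: "Zs m n b \<Longrightarrow> rho \<psi> n b f = (\<lambda>N. \<psi> b * f N)"
proof -
  assume z: "Zs m n b"
  have "lin \<psi> (brk b v) = 0" if "v \<in> Vset n" for v
    using Z_closed2[OF z] isV_gens that unfolding Vset_def by blast
  then show ?thesis using Zs_notV[OF z] by (simp add: rho_def Dop_def)
qed

lemma sl_Z: "(\<And>p. p \<in> set xs \<Longrightarrow> Zs m n (snd p)) \<Longrightarrow>
   sum_list (map (\<lambda>(c, b). c * rho \<psi> n b f N) xs) = lin \<psi> xs * f N"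
proof (induction xs)
  case Nil then show ?case by (simp add: lin_def)
next
  case (Cons p xs)
  obtain c b where p: "p = (c, b)" by force
  have "Zs m n b" using Cons.prems[of p] p by simp
  then show ?case using Cons p by (simp add: rho_Z lin_def algebra_simps)
qed

end


context W begin

lemma comm_VV: "isV n x \<Longrightarrow> isV n y \<Longrightarrow> rho \<psi> n x (rho \<psi> n y f) N - rho \<psi> n y (rho \<psi> n x f) N = 0"
proof -
  assume "isV n x" "isV n y"
  then have "rho \<psi> n x (rho \<psi> n y f) N = (if x \<in># N \<and> y \<in># N - {#x#} then f (N - {#x#} - {#y#}) else 0)"
     and "rho \<psi> n y (rho \<psi> n x f) N = (if y \<in># N \<and> x \<in># N - {#y#} then f (N - {#y#} - {#x#}) else 0)"
    by (simp_all add: rho_def)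
  moreover have "x \<in># N \<and> y \<in># N - {#x#} \<longleftrightarrow> y \<in># N \<and> x \<in># N - {#y#}"
    by (cases "x = y") (auto simp: in_diff_count)
  moreover have "N - {#x#} - {#y#} = N - {#y#} - {#x#}"
    by (simp add: diff_right_commute add_mset_commute)
  ultimately show ?thesis by simp
qed

lemma term_eq:
  "(if x \<in># N then of_nat (count (N - {#x#}) v + 1) * f (N - {#x#} + {#v#}) else 0) -
   of_nat (count N v + 1) * (if x \<in># N + {#v#} then f (N + {#v#} - {#x#}) else 0) =
   (if v = x then - f N else (0::complex))"
proof (cases "v = x")
  case True
  then show ?thesis
  proof (cases "x \<in># N")
    case True
    have "0 < count N x" using True by simp
    then have "count (N - {#x#}) x + 1 = count N x" by simp
    then have e: "of_nat (count (N - {#x#}) x + 1) = (of_nat (count N x) :: complex)" by simp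
    have "N - {#x#} + {#x#} = N" using True by simp
    then show ?thesis using \<open>v = x\<close> True e by (simp add: algebra_simps)
  next
    case False
    then have "count N x = 0" by (simp add: count_eq_zero_iff)
    then show ?thesis using \<open>v = x\<close> False by simp
  qed
next
  case False
  then have c: "count (N - {#x#}) v = count N v" by simp
  have i: "x \<in># N + {#v#} \<longleftrightarrow> x \<in># N" using False by simp
  have "x \<in># N \<Longrightarrow> N - {#x#} + {#v#} = N + {#v#} - {#x#}"
    by (simp add: diff_union_single_conv)
  then show ?thesis using False c i by (cases "x \<in># N") simp_all
qed

lemma comm_Vn: "isV n x \<Longrightarrow> \<not> isV n y \<Longrightarrow>
   rho \<psi> n x (rho \<psi> n y f) N - rho \<psi> n y (rho \<psi> n x f) N = - lin \<psi> (brk y x) * f N"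
proof -
  assume x: "isV n x" and y: "\<not> isV n y"
  have e1: "rho \<psi> n x (rho \<psi> n y f) N = (if x \<in># N then \<psi> y * f (N - {#x#}) else 0) +
      (\<Sum>v\<in>Vset n. lin \<psi> (brk y v) *
       (if x \<in># N then of_nat (count (N - {#x#}) v + 1) * f (N - {#x#} + {#v#}) else 0))"
    using x y by (cases "x \<in># N") (simp_all add: rho_def Dop_def deriv_def)
  have e2: "rho \<psi> n y (rho \<psi> n x f) N = (if x \<in># N then \<psi> y * f (N - {#x#}) else 0) +
      (\<Sum>v\<in>Vset n. lin \<psi> (brk y v) *
       (of_nat (count N v + 1) * (if x \<in># N + {#v#} then f (N + {#v#} - {#x#}) else 0)))"
    using x y by (simp add: rho_def Dop_def deriv_def)
  have "rho \<psi> n x (rho \<psi> n y f) N - rho \<psi> n y (rho \<psi> n x f) N =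
     (\<Sum>v\<in>Vset n. lin \<psi> (brk y v) *
       ((if x \<in># N then of_nat (count (N - {#x#}) v + 1) * f (N - {#x#} + {#v#}) else 0) -
        of_nat (count N v + 1) * (if x \<in># N + {#v#} then f (N + {#v#} - {#x#}) else 0)))"
    unfolding e1 e2 by (simp add: right_diff_distrib sum_subtractf)
  also have "\<dots> = (\<Sum>v\<in>Vset n. lin \<psi> (brk y v) * (if v = x then - f N else 0))"
    by (simp only: term_eq)
  also have "\<dots> = - lin \<psi> (brk y x) * f N"
  proof -
    have "x \<in> Vset n" using x by (simp add: Vset_def)
    then show ?thesis by (simp add: if_distrib[of "\<lambda>t. _ * t"] sum.delta cong: if_cong)
  qed
  finally show ?thesis .
qed


lemma comm_nn: "\<not> isV n x \<Longrightarrow> \<not> isV n y \<Longrightarrow>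
   rho \<psi> n x (rho \<psi> n y f) N - rho \<psi> n y (rho \<psi> n x f) N = 0"
proof -
  assume x: "\<not> isV n x" and y: "\<not> isV n y"
  have "rho \<psi> n x (rho \<psi> n y f) N = \<psi> x * (\<psi> y * f N + Dop \<psi> n y f N) + (\<psi> y * Dop \<psi> n x f N + Dop \<psi> n x (Dop \<psi> n y f) N)"
    using x y by (simp add: rho_def Dop_add Dop_scale)
  moreover have "rho \<psi> n y (rho \<psi> n x f) N = \<psi> y * (\<psi> x * f N + Dop \<psi> n x f N) + (\<psi> x * Dop \<psi> n y f N + Dop \<psi> n y (Dop \<psi> n x f) N)"
    using x y by (simp add: rho_def Dop_add Dop_scale)
  ultimately show ?thesis by (simp add: Dop_comm[of \<psi> n x y f] algebra_simps)
qed

lemma comm: assumes "x \<in> gens m 0" "y \<in> gens m 0"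
  shows "rho \<psi> n x (rho \<psi> n y f) N - rho \<psi> n y (rho \<psi> n x f) N =
     sum_list (map (\<lambda>(c, b). c * rho \<psi> n b f N) (brk x y))"
proof (cases "isV n x")
  case xV: True
  show ?thesis
  proof (cases "isV n y")
    case True
    then show ?thesis using xV comm_VV brk_VV by simp
  next
    case False
    then have yg: "y \<in> gens m n" using gens_mn0 assms by blast
    have "sum_list (map (\<lambda>(c, b). c * rho \<psi> n b f N) (brk x y)) = lin \<psi> (brk x y) * f N"
      by (rule sl_Z) (use brk_Z[OF assms(1) yg] in blast)
    then show ?thesis using comm_Vn[OF xV False] lin_antisym[of \<psi> x y] by simp
  qed
next
  case xn: False
  then have xg: "x \<in> gens m n" using gens_mn0 assms by blast
  have s: "sum_list (map (\<lambda>(c, b). c * rho \<psi> n b f N) (brk x y)) = lin \<psi> (brk x y) * f N"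
    by (rule sl_Z) (use brk_Z[OF assms(2) xg] in blast)
  show ?thesis
  proof (cases "isV n y")
    case True
    have "rho \<psi> n y (rho \<psi> n x f) N - rho \<psi> n x (rho \<psi> n y f) N = - lin \<psi> (brk x y) * f N"
      by (rule comm_Vn[OF True xn])
    then show ?thesis using s by (simp add: algebra_simps)
  next
    case False
    then have yg: "y \<in> gens m n" using gens_mn0 assms by blast
    show ?thesis using s W1[OF xg yg] comm_nn[OF xn False] by simp
  qed
qed

lemma rho_one: "x \<in> gens m n \<Longrightarrow> rho \<psi> n x one = (\<lambda>N. \<psi> x * one N)"
proof -
  assume x: "x \<in> gens m n"
  then have "\<not> isV n x" using gens_mn0 gmn_gm0 by blast
  moreover have "deriv v one N = 0" for v N by (simp add: deriv_def one_def)
  ultimately show ?thesis by (simp add: rho_def Dop_def)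
qed

end


definition Phi :: "(gb \<Rightarrow> complex) \<Rightarrow> nat \<Rightarrow> fa \<Rightarrow> pf" where
  "Phi \<psi> n p = (\<lambda>N. \<Sum>w\<in>{w. p w \<noteq> 0}. p w * RL \<psi> n w one N)"

abbreviation fs :: "fa \<Rightarrow> bool" where "fs p \<equiv> finite {w. p w \<noteq> 0}"

lemma Phi_superset: "finite A \<Longrightarrow> {w. p w \<noteq> 0} \<subseteq> A \<Longrightarrow> Phi \<psi> n p N = (\<Sum>w\<in>A. p w * RL \<psi> n w one N)"
  unfolding Phi_def by (rule sum.mono_neutral_left) auto

lemma fs_add: "fs p \<Longrightarrow> fs q \<Longrightarrow> fs (\<lambda>u. p u + q u)"
  by (rule finite_subset[of _ "{w. p w \<noteq> 0} \<union> {w. q w \<noteq> 0}"]) auto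
lemma fs_scale: "fs p \<Longrightarrow> fs (\<lambda>u. c * p u)"
  by (rule finite_subset[of _ "{w. p w \<noteq> 0}"]) auto
lemma fs_mono: "fs (mono w)"
  by (rule finite_subset[of _ "{w}"]) (auto simp: mono_def)
lemma fs_poly: "fs (poly ws)"
proof (induction ws)
  case Nil then show ?case by simp
next
  case (Cons p ws) then show ?case by (cases p) (auto simp: poly_Cons intro!: fs_add fs_scale fs_mono)
qed

lemma Phi_add: "fs p \<Longrightarrow> fs q \<Longrightarrow> Phi \<psi> n (\<lambda>u. p u + q u) N = Phi \<psi> n p N + Phi \<psi> n q N"
proof -
  assume p: "fs p" and q: "fs q"
  let ?A = "{w. p w \<noteq> 0} \<union> {w. q w \<noteq> 0}"
  have "Phi \<psi> n (\<lambda>u. p u + q u) N = (\<Sum>w\<in>?A. (p w + q w) * RL \<psi> n w one N)"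
    by (rule Phi_superset) (use p q in auto)
  also have "\<dots> = (\<Sum>w\<in>?A. p w * RL \<psi> n w one N) + (\<Sum>w\<in>?A. q w * RL \<psi> n w one N)"
    by (simp add: distrib_right sum.distrib)
  also have "\<dots> = Phi \<psi> n p N + Phi \<psi> n q N"
    using Phi_superset[of ?A p] Phi_superset[of ?A q] p q by auto
  finally show ?thesis .
qed

lemma Phi_scale: "Phi \<psi> n (\<lambda>u. c * p u) N = c * Phi \<psi> n p N"
proof (cases "c = 0")
  case True then show ?thesis by (simp add: Phi_def)
next
  case False
  then have "{w. c * p w \<noteq> 0} = {w. p w \<noteq> 0}" by auto
  then show ?thesis by (simp add: Phi_def sum_distrib_left mult.assoc)
qed

lemma Phi_mono: "Phi \<psi> n (mono w) N = RL \<psi> n w one N"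
proof -
  have "Phi \<psi> n (mono w) N = (\<Sum>v\<in>{w}. mono w v * RL \<psi> n v one N)"
    by (rule Phi_superset) (auto simp: mono_def)
  then show ?thesis by (simp add: mono_def)
qed

lemma Phi_poly: "Phi \<psi> n (poly ws) N = sum_list (map (\<lambda>(c, w). c * RL \<psi> n w one N) ws)"
proof (induction ws)
  case Nil then show ?case by (simp add: Phi_def)
next
  case (Cons p ws)
  obtain c w where p: "p = (c, w)" by force
  have "Phi \<psi> n (poly (p # ws)) N = Phi \<psi> n (\<lambda>u. c * mono w u) N + Phi \<psi> n (poly ws) N"
    unfolding p poly_Cons by (rule Phi_add) (auto intro: fs_scale fs_mono fs_poly)
  then show ?case using Cons by (simp add: p Phi_scale Phi_mono)
qed

lemma sl_neg_map: fixes G :: "'c \<Rightarrow> complex" and xs :: "(complex \<times> 'b) list" shows "sum_list (map (\<lambda>(c, w). c * G w) (map (\<lambda>(c, \<beta>). (- c, h \<beta>)) xs)) =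
   - sum_list (map (\<lambda>(c, \<beta>). c * G (h \<beta>)) xs)"
  by (induction xs) (auto simp: algebra_simps)

definition good :: "nat \<Rightarrow> pf \<Rightarrow> bool" where
  "good n f \<longleftrightarrow> finite {N. f N \<noteq> 0} \<and> (\<forall>N. f N \<noteq> 0 \<longrightarrow> set_mset N \<subseteq> Vset n)"

lemma good_one: "good n one" by (auto simp: good_def one_def)
lemma good_zero: "good n (\<lambda>_. 0)" by (auto simp: good_def)
lemma good_add: "good n f \<Longrightarrow> good n g \<Longrightarrow> good n (\<lambda>N. f N + g N)"
proof -
  assume f: "good n f" and g: "good n g"
  have s: "{N. f N + g N \<noteq> 0} \<subseteq> {N. f N \<noteq> 0} \<union> {N. g N \<noteq> 0}" by auto
  show ?thesis unfolding good_def
  proof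
    show "finite {N. f N + g N \<noteq> 0}" using f g s unfolding good_def by (meson finite_UnI finite_subset)
    show "\<forall>N. f N + g N \<noteq> 0 \<longrightarrow> set_mset N \<subseteq> Vset n" using f g s unfolding good_def by blast
  qed
qed
lemma good_scale: "good n f \<Longrightarrow> good n (\<lambda>N. c * f N)"
  unfolding good_def by (auto intro: finite_subset[of _ "{N. f N \<noteq> 0}"])
lemma good_sum: "finite A \<Longrightarrow> (\<And>i. i \<in> A \<Longrightarrow> good n (g i)) \<Longrightarrow> good n (\<lambda>N. \<Sum>i\<in>A. g i N)"
proof (induction A rule: finite_induct)
  case empty then show ?case by (simp add: good_zero)
next
  case (insert a A) then show ?case by (simp add: good_add)
qed
lemma good_deriv: "good n f \<Longrightarrow> good n (deriv v f)"
proof -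
  assume g: "good n f"
  have "{N. deriv v f N \<noteq> 0} \<subseteq> (\<lambda>N. N - {#v#}) ` {N. f N \<noteq> 0}"
  proof
    fix N assume "N \<in> {N. deriv v f N \<noteq> 0}"
    then have "f (N + {#v#}) \<noteq> 0" by (simp add: deriv_def)
    then show "N \<in> (\<lambda>N. N - {#v#}) ` {N. f N \<noteq> 0}" by (intro image_eqI[of _ _ "N + {#v#}"]) auto
  qed
  moreover have "set_mset N \<subseteq> Vset n" if "deriv v f N \<noteq> 0" for N
  proof -
    have "f (N + {#v#}) \<noteq> 0" using that by (simp add: deriv_def)
    then have "set_mset (N + {#v#}) \<subseteq> Vset n" using g unfolding good_def by blast
    then show ?thesis by auto
  qed
  ultimately show ?thesis using g unfolding good_def by (auto intro: finite_subset)
qed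
lemma good_rho: "good n f \<Longrightarrow> good n (rho \<psi> n x f)"
proof (cases "isV n x")
  case True
  assume g: "good n f"
  have "{N. rho \<psi> n x f N \<noteq> 0} \<subseteq> (\<lambda>N. N + {#x#}) ` {N. f N \<noteq> 0}"
  proof
    fix N assume "N \<in> {N. rho \<psi> n x f N \<noteq> 0}"
    then have "x \<in># N" "f (N - {#x#}) \<noteq> 0" using True by (auto simp: rho_def split: if_splits)
    then show "N \<in> (\<lambda>N. N + {#x#}) ` {N. f N \<noteq> 0}" by (intro image_eqI[of _ _ "N - {#x#}"]) auto
  qed
  moreover have "set_mset N \<subseteq> Vset n" if "rho \<psi> n x f N \<noteq> 0" for N
  proof -
    have "x \<in># N" "f (N - {#x#}) \<noteq> 0" using that True by (auto simp: rho_def split: if_splits)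
    then have "set_mset (N - {#x#}) \<subseteq> Vset n" using g by (simp add: good_def)
    moreover have "x \<in> Vset n" using True by (simp add: Vset_def)
    moreover have "set_mset N \<subseteq> set_mset (N - {#x#}) \<union> {x}"
      using \<open>x \<in># N\<close> by (metis Un_insert_right insert_DiffM set_mset_add_mset_insert subset_refl sup_bot.right_neutral)
    ultimately show ?thesis by blast
  qed
  ultimately show ?thesis using g unfolding good_def by (auto intro: finite_subset)
next
  case False
  assume g: "good n f"
  have "good n (\<lambda>N. \<psi> x * f N + Dop \<psi> n x f N)"
    unfolding Dop_def
    by (intro good_add good_scale good_sum g good_deriv finite_Vset)
  then show ?thesis using False by (simp add: rho_def)
qed
lemma good_RL: "good n f \<Longrightarrow> good n (RL \<psi> n w f)"
  by (induction w) (auto simp: good_rho)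

lemma good_Phi: "fs p \<Longrightarrow> good n (Phi \<psi> n p)"
  unfolding Phi_def by (intro good_sum good_scale good_RL good_one) auto

definition lst :: "gb multiset \<Rightarrow> gb list" where "lst M = (SOME l. mset l = M)"

lemma mset_lst[simp]: "mset (lst M) = M"
  unfolding lst_def by (rule someI_ex) (rule ex_mset)

lemma lst_empty[simp]: "lst {#} = []"
  by (metis mset_lst mset_zero_iff)

definition sig :: "pf \<Rightarrow> fa" where
  "sig f = (\<lambda>u. if u = lst (mset u) then f (mset u) else 0)"

definition delta :: "gb multiset \<Rightarrow> pf" where "delta M = (\<lambda>N. if N = M then 1 else 0)"

lemma sig_delta: "sig (delta M) = mono (lst M)"
  by (rule ext) (auto simp: sig_def delta_def mono_def)

lemma one_delta: "one = delta {#}" by (simp add: one_def delta_def)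

lemma sig_add: "sig (\<lambda>N. f N + g N) = (\<lambda>u. sig f u + sig g u)"
  by (simp add: sig_def fun_eq_iff)
lemma sig_scale: "sig (\<lambda>N. c * f N) = (\<lambda>u. c * sig f u)"
  by (simp add: sig_def fun_eq_iff)
lemma sig_sum: "sig (\<lambda>N. \<Sum>i\<in>A. g i N) u = (\<Sum>i\<in>A. sig (g i) u)"
  by (simp add: sig_def)

lemma f_expand: "finite {N. f N \<noteq> 0} \<Longrightarrow> f N = (\<Sum>M\<in>{N. f N \<noteq> 0}. f M * delta M N)"
proof -
  assume fin: "finite {N. f N \<noteq> 0}"
  have "(\<Sum>M\<in>{N. f N \<noteq> 0}. f M * delta M N) = (\<Sum>M\<in>{N. f N \<noteq> 0}. if M = N then f N else 0)"
    by (rule sum.cong) (auto simp: delta_def)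
  also have "\<dots> = f N" using fin by (simp add: sum.delta)
  finally show ?thesis by simp
qed


context W begin

lemma Phi_gen1:
  assumes "x \<in> gens m 0" "y \<in> gens m 0"
  shows "Phi \<psi> n (poly ([(1, a @ x # y # b), (-1, a @ y # x # b)] @ map (\<lambda>(c, \<beta>). (- c, a @ \<beta> # b)) (brk x y))) N = 0"
proof -
  define g where "g = RL \<psi> n b one"
  have z: "(\<lambda>N. rho \<psi> n x (rho \<psi> n y g) N - rho \<psi> n y (rho \<psi> n x g) N
      - sum_list (map (\<lambda>(c, \<beta>). c * rho \<psi> n \<beta> g N) (brk x y))) = (\<lambda>_. 0)"
    using comm[OF assms] by simp
  have "RL \<psi> n a (\<lambda>N. rho \<psi> n x (rho \<psi> n y g) N - rho \<psi> n y (rho \<psi> n x g) N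
      - sum_list (map (\<lambda>(c, \<beta>). c * rho \<psi> n \<beta> g N) (brk x y))) N =
      RL \<psi> n a (rho \<psi> n x (rho \<psi> n y g)) N - RL \<psi> n a (rho \<psi> n y (rho \<psi> n x g)) N
      - sum_list (map (\<lambda>(c, \<beta>). c * RL \<psi> n a (rho \<psi> n \<beta> g) N) (brk x y))"
    by (simp add: RL_diff RL_sl)
  then have "RL \<psi> n a (rho \<psi> n x (rho \<psi> n y g)) N - RL \<psi> n a (rho \<psi> n y (rho \<psi> n x g)) N
      - sum_list (map (\<lambda>(c, \<beta>). c * RL \<psi> n a (rho \<psi> n \<beta> g) N) (brk x y)) = 0"
    unfolding z RL_zero by simp
  then show ?thesis
    unfolding Phi_poly map_append sum_list_append sl_neg_map
    by (simp add: RL_append g_def)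
qed

lemma Phi_gen2:
  assumes "x \<in> gens m n"
  shows "Phi \<psi> n (poly [(1, a @ [x]), (- \<psi> x, a)]) N = 0"
proof -
  have "RL \<psi> n a (\<lambda>N. rho \<psi> n x one N - \<psi> x * one N) N = RL \<psi> n a (rho \<psi> n x one) N - \<psi> x * RL \<psi> n a one N"
    by (simp add: RL_diff RL_scale)
  moreover have "(\<lambda>N. rho \<psi> n x one N - \<psi> x * one N) = (\<lambda>_. 0)" using rho_one[OF assms] by simp
  ultimately show ?thesis by (simp add: Phi_poly RL_append RL_zero)
qed

lemma Phi_K: "p \<in> K \<Longrightarrow> fs p \<and> (\<forall>N. Phi \<psi> n p N = 0)"
  unfolding indker_def
proof (induction p rule: cspan.induct)
  case zero then show ?case by (simp add: Phi_def)
next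
  case (base p)
  then show ?case
  proof
    assume "p \<in> {fmul (mono a) (fmul (relel x y) (mono b)) | a b x y.
         set a \<subseteq> gens m 0 \<and> set b \<subseteq> gens m 0 \<and> x \<in> gens m 0 \<and> y \<in> gens m 0}"
    then obtain a b x y where p: "p = fmul (mono a) (fmul (relel x y) (mono b))"
      and xy: "x \<in> gens m 0" "y \<in> gens m 0" by blast
    show ?thesis unfolding p gen1_poly using Phi_gen1[OF xy] fs_poly by blast
  next
    assume "p \<in> {fmul (mono a) (fsub (mono [x]) (smul (\<psi> x) (mono []))) | a x.
         set a \<subseteq> gens m 0 \<and> x \<in> gens m n}"
    then obtain a x where p: "p = fmul (mono a) (fsub (mono [x]) (smul (\<psi> x) (mono [])))"
      and x: "x \<in> gens m n" by blast
    show ?thesis unfolding p gen2_poly using Phi_gen2[OF x] fs_poly by blast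
  qed
next
  case (add p q)
  then show ?case unfolding fadd_def using Phi_add fs_add by simp
next
  case (scale p c)
  then show ?case unfolding smul_def using Phi_scale fs_scale by simp
qed

lemma K_eq: "P \<in> K \<Longrightarrow> Q = P \<Longrightarrow> Q \<in> K" by simp

lemma poly_same: "poly [(1, u), (-1, u)] = (\<lambda>_. 0)"
  by (simp add: poly_Cons fun_eq_iff)

lemma move_front:
  assumes "set a \<subseteq> Vset n" "isV n x" "set b \<subseteq> Vset n"
  shows "poly [(1, a @ x # b), (-1, x # a @ b)] \<in> K"
  using assms(1)
proof (induction a)
  case Nil then show ?case using K_zero by (simp add: poly_same)
next
  case (Cons c a)
  have cV: "isV n c" and aV: "set a \<subseteq> Vset n" using Cons.prems by (auto simp: Vset_def)
  have V0: "set v \<subseteq> Vset n \<Longrightarrow> set v \<subseteq> gens m 0" for v using isV_gens unfolding Vset_def by blast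
  have k1: "poly [(1, c # a @ x # b), (-1, c # x # a @ b)] \<in> K"
    using K_left[OF Cons.IH[OF aV], of "[c]"] isV_gens[OF cV] by (simp add: fmul_mono_poly)
  have k2: "poly [(1, c # x # a @ b), (-1, x # c # a @ b)] \<in> K"
    using K_gen1[of "[]" "a @ b" c x] brk_VV[OF cV assms(2)] isV_gens[OF cV] isV_gens[OF assms(2)]
      V0[of "a @ b"] aV assms(3) by simp
  show ?case
    by (rule K_eq[OF K_add[OF k1 k2]]) (simp add: poly_Cons fun_eq_iff)
qed

lemma perm: "set u \<subseteq> Vset n \<Longrightarrow> mset u = mset u' \<Longrightarrow> poly [(1, u), (-1, u')] \<in> K"
proof (induction u arbitrary: u')
  case Nil then show ?case using K_zero by (simp add: poly_same)
next
  case (Cons x u1)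
  have "x \<in> set u'" using Cons.prems(2) by (metis list.set_intros(1) set_mset_mset)
  then obtain a b where u': "u' = a @ x # b" by (meson split_list)
  have xV: "isV n x" and u1V: "set u1 \<subseteq> Vset n" using Cons.prems by (auto simp: Vset_def)
  have ms: "mset u1 = mset (a @ b)" using Cons.prems(2) u' by simp
  have abV: "set (a @ b) \<subseteq> Vset n" using Cons.prems(1) ms by (metis set_mset_mset subset_code(1) Cons.prems(1) set_subset_Cons subset_trans)
  have k1: "poly [(1, x # u1), (-1, x # a @ b)] \<in> K"
    using K_left[OF Cons.IH[OF u1V ms], of "[x]"] isV_gens[OF xV] by (simp add: fmul_mono_poly)
  have k2: "poly [(1, a @ x # b), (-1, x # a @ b)] \<in> K"
    using move_front[of a x b] abV xV by simp
  show ?case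
    by (rule K_eq[OF K_diff[OF k1 k2]]) (simp add: u' poly_Cons fun_eq_iff)
qed

end


lemma fmul_mono1: "fmul (mono [x]) p u = (if take 1 u = [x] then p (drop 1 u) else 0)"
  by (simp add: fmul_mono_left)

lemma mono_Cons: "mono (x # w) u = (if take 1 u = [x] then mono w (drop 1 u) else 0)"
  by (cases u) (auto simp: mono_def)

lemma set_lst: "set (lst M) = set_mset M"
  by (metis mset_lst set_mset_mset)

lemma good_delta: "set_mset M \<subseteq> Vset n \<Longrightarrow> good n (delta M)"
  by (auto simp: good_def delta_def)

lemma rho_V_delta: "isV n y \<Longrightarrow> rho \<psi> n y (delta M) = delta (M + {#y#})"
proof (rule ext)
  fix N assume y: "isV n y"
  show "rho \<psi> n y (delta M) N = delta (M + {#y#}) N"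
  proof (cases "y \<in># N")
    case True
    then have "N - {#y#} = M \<longleftrightarrow> N = M + {#y#}" by auto
    then show ?thesis using y True by (simp add: rho_def delta_def)
  next
    case False
    then have "N \<noteq> M + {#y#}" by auto
    then show ?thesis using y False by (simp add: rho_def delta_def)
  qed
qed

context W begin

lemma lin_reduce:
  assumes g: "good n f"
    and mono: "\<And>M. set_mset M \<subseteq> Vset n \<Longrightarrow> fsub (mono (x # lst M)) (sig (rho \<psi> n x (delta M))) \<in> K"
  shows "fsub (fmul (mono [x]) (sig f)) (sig (rho \<psi> n x f)) \<in> K"
proof -
  define A where "A = {N. f N \<noteq> 0}"
  have fin: "finite A" and AV: "\<And>M. M \<in> A \<Longrightarrow> set_mset M \<subseteq> Vset n"
    using g unfolding good_def A_def by auto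
  have fe': "f N = (\<Sum>M\<in>A. f M * delta M N)" for N
    using f_expand[of f N] fin unfolding A_def by blast
  have fe: "f = (\<lambda>N. \<Sum>M\<in>A. f M * delta M N)"
    by (rule ext) (rule fe')
  have e1: "sig f u = (\<Sum>M\<in>A. f M * mono (lst M) u)" for u
  proof -
    have "sig f = sig (\<lambda>N. \<Sum>M\<in>A. f M * delta M N)"
      by (rule arg_cong[where f = sig, OF fe])
    then have "sig f u = sig (\<lambda>N. \<Sum>M\<in>A. f M * delta M N) u" by (rule fun_cong)
    also have "\<dots> = (\<Sum>M\<in>A. f M * mono (lst M) u)"
      by (simp add: sig_sum sig_scale sig_delta)
    finally show ?thesis .
  qed
  have e2: "fmul (mono [x]) (sig f) u = (\<Sum>M\<in>A. f M * mono (x # lst M) u)" for u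
    by (cases "take 1 u = [x]") (simp_all add: fmul_mono1 e1 mono_Cons)
  have e3: "rho \<psi> n x f = (\<lambda>N. \<Sum>M\<in>A. f M * rho \<psi> n x (delta M) N)"
  proof -
    have "rho \<psi> n x f = rho \<psi> n x (\<lambda>N. \<Sum>M\<in>A. f M * delta M N)"
      by (rule arg_cong[where f = "rho \<psi> n x", OF fe])
    then show ?thesis by (simp add: rho_sum rho_scale)
  qed
  have e4: "sig (rho \<psi> n x f) u = (\<Sum>M\<in>A. f M * sig (rho \<psi> n x (delta M)) u)" for u
    unfolding e3 by (simp add: sig_sum sig_scale)
  have "fsub (fmul (mono [x]) (sig f)) (sig (rho \<psi> n x f)) =
     (\<lambda>u. \<Sum>M\<in>A. f M * fsub (mono (x # lst M)) (sig (rho \<psi> n x (delta M))) u)"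
    by (rule ext) (simp add: fsub_def e2 e4 sum_subtractf algebra_simps)
  also have "\<dots> \<in> K"
    by (rule K_sum[OF fin]) (use K_scale mono AV in blast)
  finally show ?thesis .
qed

lemma SLV: assumes "isV n y" "good n f"
  shows "fsub (fmul (mono [y]) (sig f)) (sig (rho \<psi> n y f)) \<in> K"
proof (rule lin_reduce[OF assms(2)])
  fix M assume MV: "set_mset M \<subseteq> Vset n"
  have yV: "y \<in> Vset n" using assms(1) by (simp add: Vset_def)
  have "poly [(1, y # lst M), (-1, lst (M + {#y#}))] \<in> K"
    by (rule perm) (use MV yV in \<open>auto simp: set_lst\<close>)
  moreover have "poly [(1, y # lst M), (-1, lst (M + {#y#}))] = fsub (mono (y # lst M)) (sig (rho \<psi> n y (delta M)))"
    by (simp add: rho_V_delta[OF assms(1)] sig_delta fsub_def poly_Cons fun_eq_iff)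
  ultimately show "fsub (mono (y # lst M)) (sig (rho \<psi> n y (delta M))) \<in> K" by simp
qed

lemma SLn: assumes x: "x \<in> gens m n"
  shows "set u \<subseteq> Vset n \<Longrightarrow> fsub (mono (x # u)) (sig (rho \<psi> n x (delta (mset u)))) \<in> K"
proof (induction u)
  case Nil
  have "fsub (mono [x]) (sig (rho \<psi> n x (delta (mset [])))) = poly [(1, [] @ [x]), (- \<psi> x, [])]"
  proof -
    have r: "rho \<psi> n x (delta {#}) = (\<lambda>N. \<psi> x * delta {#} N)"
      using rho_one[OF x] by (simp add: one_delta)
    show ?thesis by (simp add: r sig_scale sig_delta fsub_def poly_Cons fun_eq_iff)
  qed
  then show ?case using K_gen2[of "[]" x] x by simp
next
  case (Cons y u')
  have yV: "isV n y" and u'V: "set u' \<subseteq> Vset n" using Cons.prems by (auto simp: Vset_def)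
  have V0: "set v \<subseteq> Vset n \<Longrightarrow> set v \<subseteq> gens m 0" for v using isV_gens unfolding Vset_def by blast
  have xg: "x \<in> gens m 0" using x gmn_gm0 by blast
  have yg: "y \<in> gens m 0" using isV_gens[OF yV] .
  define d where "d = delta (mset u')"
  define g where "g = rho \<psi> n x d"
  define L where "L = lin \<psi> (brk x y)"
  have gd: "good n d" unfolding d_def by (rule good_delta) (use u'V in simp)
  have gg: "good n g" unfolding g_def by (rule good_rho[OF gd])
  have K1: "poly ([(1, x # y # u'), (-1, y # x # u')] @ map (\<lambda>(c, \<beta>). (- c, \<beta> # u')) (brk x y)) \<in> K"
    using K_gen1[of "[]" u' x y] xg yg V0[OF u'V] by simp
  have K2: "(\<lambda>w. sum_list (map (\<lambda>(c, \<beta>). c * poly [(1, \<beta> # u'), (- \<psi> \<beta>, u')] w) (brk x y))) \<in> K"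
  proof (rule K_sl)
    fix p assume "p \<in> set (brk x y)"
    then have "Zs m n (snd p)" using brk_Z[OF yg x] by blast
    then show "poly [(1, snd p # u'), (- \<psi> (snd p), u')] \<in> K" using Zlemma V0[OF u'V] by blast
  qed
  have K3: "fmul (mono [y]) (fsub (mono (x # u')) (sig g)) \<in> K"
    using K_left[OF Cons.IH[OF u'V], of "[y]"] yg unfolding g_def d_def by simp
  have K4: "fsub (fmul (mono [y]) (sig g)) (sig (rho \<psi> n y g)) \<in> K"
    by (rule SLV[OF yV gg])
  have K5: "poly [(1, u'), (-1, lst (mset u'))] \<in> K"
    by (rule perm) (use u'V in auto)
  have rc: "rho \<psi> n x (delta (mset (y # u'))) N = rho \<psi> n y g N + L * d N" for N
  proof -
    have "delta (mset (y # u')) = rho \<psi> n y d"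
      unfolding d_def rho_V_delta[OF yV] by (simp add: add.commute)
    moreover have "rho \<psi> n x (rho \<psi> n y d) N - rho \<psi> n y (rho \<psi> n x d) N = L * d N"
      unfolding comm[OF xg yg] L_def
      by (rule sl_Z) (use brk_Z[OF yg x] in blast)
    ultimately show ?thesis unfolding g_def by (simp add: algebra_simps)
  qed
  have sr: "sig (rho \<psi> n x (delta (mset (y # u')))) w = sig (rho \<psi> n y g) w + L * mono (lst (mset u')) w" for w
  proof -
    have "sig (rho \<psi> n x (delta (mset (y # u')))) = sig (\<lambda>N. rho \<psi> n y g N + L * d N)"
      using rc by presburger
    then show ?thesis by (simp add: sig_add sig_scale d_def sig_delta)
  qed
  have e2: "sum_list (map (\<lambda>(c, \<beta>). c * poly [(1, \<beta> # u'), (- \<psi> \<beta>, u')] w) (brk x y)) =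
       sum_list (map (\<lambda>(c, \<beta>). c * mono (\<beta> # u') w) (brk x y)) - L * mono u' w" for w
    using sl_diff[of "\<lambda>\<beta>. mono (\<beta> # u') w" "\<lambda>\<beta>. \<psi> \<beta> * mono u' w" "brk x y"]
    by (simp add: poly_Cons sl_lin L_def)
  have e3: "fmul (mono [y]) (fsub (mono (x # u')) (sig g)) w = mono (y # x # u') w - fmul (mono [y]) (sig g) w" for w
    by (cases "take 1 w = [y]") (simp_all add: fmul_mono1 mono_Cons fsub_def)
  have "fsub (mono (x # y # u')) (sig (rho \<psi> n x (delta (mset (y # u'))))) = (\<lambda>w.
     poly ([(1, x # y # u'), (-1, y # x # u')] @ map (\<lambda>(c, \<beta>). (- c, \<beta> # u')) (brk x y)) w
     + sum_list (map (\<lambda>(c, \<beta>). c * poly [(1, \<beta> # u'), (- \<psi> \<beta>, u')] w) (brk x y))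
     + fmul (mono [y]) (fsub (mono (x # u')) (sig g)) w
     + fsub (fmul (mono [y]) (sig g)) (sig (rho \<psi> n y g)) w
     + L * poly [(1, u'), (-1, lst (mset u'))] w)"
  proof (rule ext)
    fix w
    define S where "S = sum_list (map (\<lambda>(c, \<beta>). c * mono (\<beta> # u') w) (brk x y))"
    have p0: "fsub (mono (x # y # u')) (sig (rho \<psi> n x (delta (mset (y # u'))))) w =
       mono (x # y # u') w - sig (rho \<psi> n y g) w - L * mono (lst (mset u')) w"
      unfolding fsub_def sr by simp
    have p1: "poly ([(1, x # y # u'), (-1, y # x # u')] @ map (\<lambda>(c, \<beta>). (- c, \<beta> # u')) (brk x y)) w
       = mono (x # y # u') w - mono (y # x # u') w - S"
      unfolding S_def by (simp add: poly_append poly_Cons poly_map_neg)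
    have p2: "sum_list (map (\<lambda>(c, \<beta>). c * poly [(1, \<beta> # u'), (- \<psi> \<beta>, u')] w) (brk x y)) = S - L * mono u' w"
      unfolding S_def by (rule e2)
    have p4: "fsub (fmul (mono [y]) (sig g)) (sig (rho \<psi> n y g)) w = fmul (mono [y]) (sig g) w - sig (rho \<psi> n y g) w"
      by (simp add: fsub_def)
    have p5: "poly [(1, u'), (-1, lst (mset u'))] w = mono u' w - mono (lst (mset u')) w"
      by (simp add: poly_Cons)
    show "fsub (mono (x # y # u')) (sig (rho \<psi> n x (delta (mset (y # u'))))) w =
     poly ([(1, x # y # u'), (-1, y # x # u')] @ map (\<lambda>(c, \<beta>). (- c, \<beta> # u')) (brk x y)) w
     + sum_list (map (\<lambda>(c, \<beta>). c * poly [(1, \<beta> # u'), (- \<psi> \<beta>, u')] w) (brk x y))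
     + fmul (mono [y]) (fsub (mono (x # u')) (sig g)) w
     + fsub (fmul (mono [y]) (sig g)) (sig (rho \<psi> n y g)) w
     + L * poly [(1, u'), (-1, lst (mset u'))] w"
      unfolding p0 p1 p2 e3 p4 p5 by (simp add: algebra_simps)
  qed
  also have "\<dots> \<in> K"
    by (intro K_add K_scale K1 K2 K3 K4 K5)
  finally show ?case .
qed

lemma SL: assumes "x \<in> gens m 0" "good n f"
  shows "fsub (fmul (mono [x]) (sig f)) (sig (rho \<psi> n x f)) \<in> K"
proof (cases "isV n x")
  case True then show ?thesis using SLV assms by blast
next
  case False
  then have x: "x \<in> gens m n" using gens_mn0 assms by blast
  show ?thesis
  proof (rule lin_reduce[OF assms(2)])
    fix M assume "set_mset M \<subseteq> Vset n"
    then show "fsub (mono (x # lst M)) (sig (rho \<psi> n x (delta M))) \<in> K"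
      using SLn[OF x, of "lst M"] by (simp add: set_lst)
  qed
qed

lemma straight_word: "set w \<subseteq> gens m 0 \<Longrightarrow> fsub (mono w) (sig (RL \<psi> n w one)) \<in> K"
proof (induction w)
  case Nil
  show ?case using K_zero by (simp add: one_delta sig_delta fsub_def)
next
  case (Cons x w)
  have k1: "fmul (mono [x]) (fsub (mono w) (sig (RL \<psi> n w one))) \<in> K"
    using K_left[OF Cons.IH] Cons.prems by simp
  have k2: "fsub (fmul (mono [x]) (sig (RL \<psi> n w one))) (sig (rho \<psi> n x (RL \<psi> n w one))) \<in> K"
    using SL Cons.prems good_RL good_one by simp
  have "fsub (mono (x # w)) (sig (RL \<psi> n (x # w) one)) =
      (\<lambda>u. fmul (mono [x]) (fsub (mono w) (sig (RL \<psi> n w one))) u +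
         fsub (fmul (mono [x]) (sig (RL \<psi> n w one))) (sig (rho \<psi> n x (RL \<psi> n w one))) u)"
    by (rule ext) (simp add: fmul_mono1 mono_Cons fsub_def)
  then show ?case using K_add[OF k1 k2] by simp
qed

lemma straight: assumes "p \<in> talg m" shows "fsub p (sig (Phi \<psi> n p)) \<in> K"
proof -
  have f: "finite {w. p w \<noteq> 0}" and sg: "\<And>w. p w \<noteq> 0 \<Longrightarrow> set w \<subseteq> gens m 0"
    using assms unfolding talg_def by auto
  have "fsub p (sig (Phi \<psi> n p)) = (\<lambda>u. \<Sum>w\<in>{w. p w \<noteq> 0}. p w * fsub (mono w) (sig (RL \<psi> n w one)) u)"
  proof (rule ext)
    fix u
    have "sig (Phi \<psi> n p) u = (\<Sum>w\<in>{w. p w \<noteq> 0}. p w * sig (RL \<psi> n w one) u)"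
      unfolding Phi_def by (simp add: sig_sum sig_scale)
    then show "fsub p (sig (Phi \<psi> n p)) u = (\<Sum>w\<in>{w. p w \<noteq> 0}. p w * fsub (mono w) (sig (RL \<psi> n w one)) u)"
      unfolding fsub_def using p_expand[OF f, of u]
      by (simp add: algebra_simps sum_subtractf)
  qed
  also have "\<dots> \<in> K"
    by (rule K_sum[OF f]) (use K_scale straight_word sg in blast)
  finally show ?thesis .
qed

end


definition idx :: "gb \<Rightarrow> int" where
  "idx b = (case b of I t \<Rightarrow> t | J t \<Rightarrow> t | _ \<Rightarrow> 0)"

lemma idx_simps[simp]: "idx (I t) = t" "idx (J t) = t" by (simp_all add: idx_def)

lemma sum_Vset: "(\<Sum>v\<in>Vset n. F v) = (\<Sum>t\<in>{0..<int n}. F (I t)) + (\<Sum>t\<in>{0..<int n}. F (J t))"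
proof -
  have "(\<Sum>v\<in>Vset n. F v) = sum F (I ` {0..<int n}) + sum F (J ` {0..<int n})"
    unfolding Vset_eq by (rule sum.union_disjoint) auto
  also have "\<dots> = (\<Sum>t\<in>{0..<int n}. F (I t)) + (\<Sum>t\<in>{0..<int n}. F (J t))"
    by (simp add: sum.reindex inj_on_def)
  finally show ?thesis .
qed

lemma sum_pick:
  assumes "j \<in> {0..<int n}" "\<And>t. j < t \<Longrightarrow> \<kappa> t = 0" "\<And>t. t < j \<Longrightarrow> d t = 0"
  shows "(\<Sum>t\<in>{0..<int n}. \<kappa> t * d t) = \<kappa> j * (d j :: complex)"
proof -
  have "(\<Sum>t\<in>{0..<int n}. \<kappa> t * d t) = (\<Sum>t\<in>{0..<int n}. if t = j then \<kappa> j * d j else 0)"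
  proof (rule sum.cong)
    fix t assume "t \<in> {0..<int n}"
    show "\<kappa> t * d t = (if t = j then \<kappa> j * d j else 0)"
    proof (cases "t = j")
      case False
      then have "t < j \<or> j < t" by auto
      then show ?thesis using assms(2,3)[of t] False by auto
    qed simp
  qed simp
  also have "\<dots> = \<kappa> j * d j" using assms(1) by (simp add: sum.delta)
  finally show ?thesis .
qed

locale W2 = W +
  assumes nz: "\<psi> (I (int (m + n) - 1)) * \<psi> (J (int (m + n) - 1)) \<noteq> 0"
begin

lemma low_deriv:
  assumes low: "\<And>N v. f N \<noteq> 0 \<Longrightarrow> v \<in># N \<Longrightarrow> j \<le> idx v" and "idx v < j"
  shows "deriv v f N = 0"
proof -
  have "f (N + {#v#}) = 0" using low[of "N + {#v#}" v] assms(2) by force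
  then show ?thesis by (simp add: deriv_def)
qed

lemma Dop_HL:
  assumes j: "0 \<le> j" "j < int n" and low: "\<And>N v. f N \<noteq> 0 \<Longrightarrow> v \<in># N \<Longrightarrow> j \<le> idx v"
  defines "a \<equiv> int m + int n - 1 - j"
  shows "Dop \<psi> n (H a) f N = \<psi> (I (int (m + n) - 1)) * deriv (I j) f N - \<psi> (J (int (m + n) - 1)) * deriv (J j) f N"
    and "Dop \<psi> n (L a) f N = of_int (j - a) * \<psi> (I (int (m + n) - 1)) * deriv (I j) f N
          + of_int (j - a) * \<psi> (J (int (m + n) - 1)) * deriv (J j) f N"
proof -
  have jr: "j \<in> {0..<int n}" using j by simp
  have aj: "a + j = int (m + n) - 1" unfolding a_def by simp
  have hi: "j < t \<Longrightarrow> int (m + n) \<le> a + t" for t unfolding a_def by simp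
  have dI: "deriv (I t) f N = 0" if "t < j" for t using low_deriv[OF low, where v="I t" and N=N] that by simp
  have dJ: "deriv (J t) f N = 0" if "t < j" for t using low_deriv[OF low, where v="J t" and N=N] that by simp
  have s1: "(\<Sum>t\<in>{0..<int n}. \<psi> (I (a + t)) * deriv (I t) f N) = \<psi> (I (int (m + n) - 1)) * deriv (I j) f N"
    using sum_pick[OF jr, of "\<lambda>t. \<psi> (I (a + t))" "\<lambda>t. deriv (I t) f N"] psiI_hi hi dI aj by simp
  have s2: "(\<Sum>t\<in>{0..<int n}. \<psi> (J (a + t)) * deriv (J t) f N) = \<psi> (J (int (m + n) - 1)) * deriv (J j) f N"
    using sum_pick[OF jr, of "\<lambda>t. \<psi> (J (a + t))" "\<lambda>t. deriv (J t) f N"] psiJ_hi hi dJ aj by simp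
  have s3: "(\<Sum>t\<in>{0..<int n}. (of_int (t - a) * \<psi> (I (a + t))) * deriv (I t) f N) = of_int (j - a) * \<psi> (I (int (m + n) - 1)) * deriv (I j) f N"
    using sum_pick[OF jr, of "\<lambda>t. of_int (t - a) * \<psi> (I (a + t))" "\<lambda>t. deriv (I t) f N"] psiI_hi hi dI aj by simp
  have s4: "(\<Sum>t\<in>{0..<int n}. (of_int (t - a) * \<psi> (J (a + t))) * deriv (J t) f N) = of_int (j - a) * \<psi> (J (int (m + n) - 1)) * deriv (J j) f N"
    using sum_pick[OF jr, of "\<lambda>t. of_int (t - a) * \<psi> (J (a + t))" "\<lambda>t. deriv (J t) f N"] psiJ_hi hi dJ aj by simp
  show "Dop \<psi> n (H a) f N = \<psi> (I (int (m + n) - 1)) * deriv (I j) f N - \<psi> (J (int (m + n) - 1)) * deriv (J j) f N"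
    unfolding Dop_def sum_Vset using s1 s2 by (simp add: lin_def sum_negf)
  show "Dop \<psi> n (L a) f N = of_int (j - a) * \<psi> (I (int (m + n) - 1)) * deriv (I j) f N
          + of_int (j - a) * \<psi> (J (int (m + n) - 1)) * deriv (J j) f N"
    unfolding Dop_def sum_Vset using s3 s4 by (simp add: lin_def add.commute)
qed

end


definition mu :: "pf \<Rightarrow> nat" where "mu f = (\<Sum>N\<in>{N. f N \<noteq> 0}. size N)"

lemma mu_deriv:
  assumes g: "good n f" and N2: "f N2 \<noteq> 0" and v: "v \<in># N2"
  shows "mu (deriv v f) < mu f"
proof -
  define A where "A = {N. f N \<noteq> 0}"
  define B where "B = {N \<in> A. v \<in># N}"
  have finA: "finite A" using g unfolding good_def A_def by simp
  have finB: "finite B" using finA unfolding B_def by simp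
  have BA: "B \<subseteq> A" unfolding B_def by auto
  have N2B: "N2 \<in> B" using N2 v unfolding A_def B_def by simp
  have sub: "{N. deriv v f N \<noteq> 0} \<subseteq> (\<lambda>N. N - {#v#}) ` B"
  proof
    fix N assume "N \<in> {N. deriv v f N \<noteq> 0}"
    then have "f (N + {#v#}) \<noteq> 0" by (simp add: deriv_def)
    then show "N \<in> (\<lambda>N. N - {#v#}) ` B"
      unfolding A_def B_def by (intro image_eqI[of _ _ "N + {#v#}"]) auto
  qed
  have "mu (deriv v f) \<le> (\<Sum>N\<in>(\<lambda>N. N - {#v#}) ` B. size N)"
    unfolding mu_def by (rule sum_mono2) (use sub finB in auto)
  also have "\<dots> \<le> (\<Sum>N\<in>B. size (N - {#v#}))"
    using sum_image_le[OF finB, of size "\<lambda>N. N - {#v#}"] by (simp add: comp_def)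
  also have "\<dots> < (\<Sum>N\<in>B. size N)"
  proof (rule sum_strict_mono[OF finB])
    show "B \<noteq> {}" using N2B by blast
    fix N assume "N \<in> B"
    then have "v \<in># N" unfolding B_def by simp
    then have "size N > 0" by (metis gr0I set_mset_empty empty_iff size_eq_0_iff_empty)
    then show "size (N - {#v#}) < size N" using \<open>v \<in># N\<close> by (simp add: size_Diff_singleton)
  qed
  also have "\<dots> \<le> (\<Sum>N\<in>A. size N)" by (rule sum_mono2[OF finA BA]) simp
  finally show ?thesis unfolding mu_def A_def .
qed

context W2 begin

context
  fixes S :: "fa set"
  assumes KS: "K \<subseteq> S" and Stalg: "S \<subseteq> talg m"
    and Sadd: "\<forall>p\<in>S. \<forall>q\<in>S. fadd p q \<in> S" and Ssm: "\<forall>p\<in>S. \<forall>c. smul c p \<in> S"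
    and Smul: "\<forall>x\<in>gens m 0. \<forall>p\<in>S. fmul (mono [x]) p \<in> S"
begin

lemma S_add: "p \<in> S \<Longrightarrow> q \<in> S \<Longrightarrow> (\<lambda>u. p u + q u) \<in> S"
  using Sadd unfolding fadd_def by blast
lemma S_scale: "p \<in> S \<Longrightarrow> (\<lambda>u. c * p u) \<in> S"
  using Ssm unfolding smul_def by blast
lemma S_lin: "p \<in> S \<Longrightarrow> q \<in> S \<Longrightarrow> (\<lambda>u. a * p u + b * q u) \<in> S"
  by (intro S_add S_scale)
lemma S_fromK: "p \<in> S \<Longrightarrow> fsub p q \<in> K \<Longrightarrow> q \<in> S"
proof -
  assume p: "p \<in> S" and k: "fsub p q \<in> K"
  have "(\<lambda>u. 1 * p u + (-1) * fsub p q u) \<in> S" using p k KS by (intro S_lin) auto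
  then show ?thesis by (simp add: fsub_def)
qed

lemma S_sig_rho: "x \<in> gens m 0 \<Longrightarrow> good n f \<Longrightarrow> sig f \<in> S \<Longrightarrow> sig (rho \<psi> n x f) \<in> S"
  using S_fromK[OF _ SL] Smul by blast

lemma S_sig_lin: "sig f \<in> S \<Longrightarrow> sig g \<in> S \<Longrightarrow> sig (\<lambda>N. a * f N + b * g N) \<in> S"
  using S_lin by (simp add: sig_add sig_scale)

lemma S_sig_Dop: "x \<in> gens m 0 \<Longrightarrow> \<not> isV n x \<Longrightarrow> good n f \<Longrightarrow> sig f \<in> S \<Longrightarrow> sig (Dop \<psi> n x f) \<in> S"
proof -
  assume a: "x \<in> gens m 0" "\<not> isV n x" "good n f" "sig f \<in> S"
  have "sig (\<lambda>N. 1 * rho \<psi> n x f N + (- \<psi> x) * f N) \<in> S"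
    by (rule S_sig_lin) (use S_sig_rho a in auto)
  moreover have "(\<lambda>N. 1 * rho \<psi> n x f N + (- \<psi> x) * f N) = Dop \<psi> n x f"
    using a(2) by (simp add: rho_def fun_eq_iff)
  ultimately show ?thesis by simp
qed

lemma S_deriv:
  assumes g: "good n f" and s: "sig f \<in> S" and j: "0 \<le> j" "j < int n"
    and low: "\<And>N v. f N \<noteq> 0 \<Longrightarrow> v \<in># N \<Longrightarrow> j \<le> idx v"
  shows "sig (deriv (I j) f) \<in> S \<and> sig (deriv (J j) f) \<in> S"
proof -
  define a where "a = int m + int n - 1 - j"
  define \<alpha> where "\<alpha> = \<psi> (I (int (m + n) - 1))"
  define \<beta> where "\<beta> = \<psi> (J (int (m + n) - 1))"
  define c :: complex where "c = of_int (j - a)"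
  have \<alpha>: "\<alpha> \<noteq> 0" and \<beta>: "\<beta> \<noteq> 0" using nz unfolding \<alpha>_def \<beta>_def by auto
  have "j - a < 0" unfolding a_def using j nm by simp
  then have c: "c \<noteq> 0" unfolding c_def by simp
  have ga: "H a \<in> gens m 0" "L a \<in> gens m 0" unfolding a_def using j by auto
  have DH: "sig (Dop \<psi> n (H a) f) \<in> S" by (rule S_sig_Dop) (use ga g s in auto)
  have DL: "sig (Dop \<psi> n (L a) f) \<in> S" by (rule S_sig_Dop) (use ga g s in auto)
  have eH: "Dop \<psi> n (H a) f N = \<alpha> * deriv (I j) f N - \<beta> * deriv (J j) f N" for N
    unfolding a_def \<alpha>_def \<beta>_def by (rule Dop_HL(1)[OF j low])
  have eL: "Dop \<psi> n (L a) f N = c * \<alpha> * deriv (I j) f N + c * \<beta> * deriv (J j) f N" for N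
    unfolding a_def \<alpha>_def \<beta>_def c_def by (rule Dop_HL(2)[OF j low])
  have "sig (\<lambda>N. (1 / (2 * \<alpha>)) * Dop \<psi> n (H a) f N + (1 / (2 * \<alpha> * c)) * Dop \<psi> n (L a) f N) \<in> S"
    by (rule S_sig_lin[OF DH DL])
  moreover have "(\<lambda>N. (1 / (2 * \<alpha>)) * Dop \<psi> n (H a) f N + (1 / (2 * \<alpha> * c)) * Dop \<psi> n (L a) f N) = deriv (I j) f"
    unfolding eH eL using \<alpha> c by (simp add: fun_eq_iff field_simps)
  moreover have "sig (\<lambda>N. (- 1 / (2 * \<beta>)) * Dop \<psi> n (H a) f N + (1 / (2 * \<beta> * c)) * Dop \<psi> n (L a) f N) \<in> S"
    by (rule S_sig_lin[OF DH DL])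
  moreover have "(\<lambda>N. (- 1 / (2 * \<beta>)) * Dop \<psi> n (H a) f N + (1 / (2 * \<beta> * c)) * Dop \<psi> n (L a) f N) = deriv (J j) f"
    unfolding eH eL using \<beta> c by (simp add: fun_eq_iff field_simps)
  ultimately show ?thesis by simp
qed


lemma S_zero: "(\<lambda>_. 0) \<in> S" using K_zero KS by blast

lemma S_sum: "finite A \<Longrightarrow> (\<And>i. i \<in> A \<Longrightarrow> f i \<in> S) \<Longrightarrow> (\<lambda>u. \<Sum>i\<in>A. c i * f i u) \<in> S"
proof (induction A rule: finite_induct)
  case empty then show ?case using S_zero by simp
next
  case (insert x F)
  then have "(\<lambda>u. c x * f x u + (\<Sum>i\<in>F. c i * f i u)) \<in> S"
    using S_add[OF S_scale] by simp
  then show ?case using insert by simp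
qed

lemma descent: "good n f \<Longrightarrow> sig f \<in> S \<Longrightarrow> f N0 \<noteq> 0 \<Longrightarrow> mono [] \<in> S"
proof (induction "mu f" arbitrary: f N0 rule: less_induct)
  case less
  show ?case
  proof (cases "\<forall>N. f N \<noteq> 0 \<longrightarrow> N = {#}")
    case True
    define c0 where "c0 = f {#}"
    have N0: "N0 = {#}" using True less.prems(3) by blast
    have c0: "c0 \<noteq> 0" using less.prems(3) N0 c0_def by simp
    have "sig f = (\<lambda>u. c0 * mono [] u)"
    proof (rule ext)
      fix u show "sig f u = c0 * mono [] u"
      proof (cases "u = []")
        case True then show ?thesis by (simp add: sig_def c0_def mono_def)
      next
        case False
        then have "mset u \<noteq> {#}" by simp
        then have "f (mset u) = 0" using True by blast
        then show ?thesis using False by (simp add: sig_def mono_def)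
      qed
    qed
    then have "(\<lambda>u. (1 / c0) * sig f u) = mono []" using c0 by (simp add: fun_eq_iff mono_def)
    moreover have "(\<lambda>u. (1 / c0) * sig f u) \<in> S" using S_scale less.prems(2) by blast
    ultimately show ?thesis by simp
  next
    case False
    then obtain N1 where N1: "f N1 \<noteq> 0" "N1 \<noteq> {#}" by blast
    define Ix where "Ix = (\<Union>N\<in>{N. f N \<noteq> 0}. idx ` set_mset N)"
    have finIx: "finite Ix" using less.prems(1) unfolding Ix_def good_def by auto
    obtain v1 where "v1 \<in># N1" using N1(2) by (metis multiset_nonemptyE)
    then have "idx v1 \<in> Ix" using N1 unfolding Ix_def by blast
    then have neIx: "Ix \<noteq> {}" by blast
    define j where "j = Min Ix"
    have "j \<in> Ix" using Min_in[OF finIx neIx] j_def by simp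
    then obtain N2 v2 where N2: "f N2 \<noteq> 0" "v2 \<in># N2" "idx v2 = j" unfolding Ix_def by blast
    have low: "j \<le> idx v" if "f N \<noteq> 0" "v \<in># N" for N v
    proof -
      have "idx v \<in> Ix" using that unfolding Ix_def by blast
      then show ?thesis unfolding j_def by (rule Min_le[OF finIx])
    qed
    have "v2 \<in> Vset n" using less.prems(1) N2 unfolding good_def by blast
    then have v2V: "isV n v2" by (simp add: Vset_def)
    have j: "0 \<le> j" "j < int n" and v2: "v2 = I j \<or> v2 = J j"
      using v2V N2(3) by (cases v2; auto)+
    have sd: "sig (deriv v2 f) \<in> S" using S_deriv[OF less.prems(1,2) j low] v2 by auto
    have gd: "good n (deriv v2 f)" using good_deriv less.prems(1) by blast
    have nz: "deriv v2 f (N2 - {#v2#}) \<noteq> 0" using N2 by (simp add: deriv_def)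
    have "mu (deriv v2 f) < mu f" by (rule mu_deriv[OF less.prems(1) N2(1,2)])
    then show ?thesis using less.hyps sd gd nz by blast
  qed
qed

lemma S_full: assumes "S \<noteq> K" shows "S = talg m"
proof -
  have "\<not> S \<subseteq> K"
  proof
    assume "S \<subseteq> K"
    then have "S = K" using KS by (rule subset_antisym)
    then show False using assms by simp
  qed
  then obtain p where p: "p \<in> S" "p \<notin> K" by blast
  have pt: "p \<in> talg m" using p Stalg by blast
  then have fp: "fs p" unfolding talg_def by simp
  have sS: "sig (Phi \<psi> n p) \<in> S" by (rule S_fromK[OF p(1) straight[OF pt]])
  have gP: "good n (Phi \<psi> n p)" by (rule good_Phi[OF fp])
  have "\<exists>N. Phi \<psi> n p N \<noteq> 0"
  proof (rule ccontr)
    assume "\<not> (\<exists>N. Phi \<psi> n p N \<noteq> 0)"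
    then have "sig (Phi \<psi> n p) = (\<lambda>_. 0)" by (simp add: sig_def fun_eq_iff)
    then have "fsub p (\<lambda>_. 0) \<in> K" using straight[OF pt] by simp
    then show False using p(2) by (simp add: fsub_def)
  qed
  then obtain N0 where "Phi \<psi> n p N0 \<noteq> 0" by blast
  then have m0: "mono [] \<in> S" using descent[OF gP sS] by blast
  have mw: "set w \<subseteq> gens m 0 \<Longrightarrow> mono w \<in> S" for w
  proof (induction w)
    case Nil then show ?case using m0 by simp
  next
    case (Cons x w)
    then have "fmul (mono [x]) (mono w) \<in> S" using Smul by simp
    then show ?case by (simp add: mono_mono)
  qed
  have "talg m \<subseteq> S"
  proof
    fix q assume q: "q \<in> talg m"
    then have fq: "fs q" and sq: "\<And>w. q w \<noteq> 0 \<Longrightarrow> set w \<subseteq> gens m 0" unfolding talg_def by auto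
    have "(\<lambda>u. \<Sum>w\<in>{w. q w \<noteq> 0}. q w * mono w u) \<in> S"
      by (rule S_sum[OF fq]) (use mw sq in blast)
    moreover have "(\<lambda>u. \<Sum>w\<in>{w. q w \<noteq> 0}. q w * mono w u) = q"
      by (rule ext) (rule p_expand[OF fq, symmetric])
    ultimately show "q \<in> S" by simp
  qed
  then show ?thesis using Stalg by blast
qed

end

lemma irred: "induced_irreducible m n \<psi>"
  unfolding induced_irreducible_def
proof (intro conjI allI impI)
  have mt: "mono [] \<in> talg m"
    unfolding talg_def by (auto simp: mono_def)
  have "Phi \<psi> n (mono []) {#} = 1" by (simp add: Phi_mono one_def)
  then have "mono [] \<notin> K" using Phi_K by force
  then show "K \<noteq> talg m" using mt by blast
next
  fix S assume a: "K \<subseteq> S \<and> S \<subseteq> talg m \<and> (\<forall>p\<in>S. \<forall>q\<in>S. fadd p q \<in> S) \<and>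
      (\<forall>p\<in>S. \<forall>c. smul c p \<in> S) \<and> (\<forall>x\<in>gens m 0. \<forall>p\<in>S. fmul (mono [x]) p \<in> S)"
  show "S = K \<or> S = talg m" using S_full a by blast
qed

end

theorem proposition3p1:
  fixes m n :: nat and \<psi> :: "gb \<Rightarrow> complex"
  assumes "0 < m" and "n \<le> m"
    and "whittaker m n \<psi>"
    and "\<psi> (I (int (m + n) - 1)) * \<psi> (J (int (m + n) - 1)) \<noteq> 0"
  shows "induced_irreducible m n \<psi> \<and>
    (\<forall>p\<in>talg m. \<forall>i::nat.
        acts_as m n \<psi> (L (int (m + n + i))) (\<psi> (L (int (m + n + i)))) p \<and>
        acts_as m n \<psi> (H (int (m + n + i))) (\<psi> (H (int (m + n + i)))) p \<and>
        acts_as m n \<psi> (I (int (n + i))) (\<psi> (I (int (n + i)))) p \<and>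
        acts_as m n \<psi> (J (int (n + i))) (\<psi> (J (int (n + i)))) p)"
proof -
  interpret W2 m n \<psi> by unfold_locales (use assms in auto)
  show ?thesis
  proof
    show "induced_irreducible m n \<psi>" by (rule irred)
    show "\<forall>p\<in>talg m. \<forall>i::nat.
        acts_as m n \<psi> (L (int (m + n + i))) (\<psi> (L (int (m + n + i)))) p \<and>
        acts_as m n \<psi> (H (int (m + n + i))) (\<psi> (H (int (m + n + i)))) p \<and>
        acts_as m n \<psi> (I (int (n + i))) (\<psi> (I (int (n + i)))) p \<and>
        acts_as m n \<psi> (J (int (n + i))) (\<psi> (J (int (n + i)))) p"
      unfolding acts_as_def by (auto intro!: acts)
  qed
qed


end
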